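(* Let $\{R_\gamma,\ \gamma\in J\}$ be an exponential family in general parametrization (see context). Assume there is $\kappa>0$ with $h(R_\gamma,R_{\gamma'})\le\kappa|\gamma-\gamma'|$ for all $\gamma,\gamma'\in J$, and that there is a compact interval $K\subset J$ of length $2\overline L>0$ and a constant $c_K>0$ with $h(R_\gamma,R_{\gamma'})\ge c_K|\gamma-\gamma'|$ for all $\gamma,\gamma'\in K$. Let $\alpha\in(0,1]$, $M>0$, and let $P_W$ be the uniform distribution on $[0,1]$. Then $$\mathcal R_n(\mathcal H_\alpha(M))\ge\frac{c_K^2}{48}\left[\left(\frac{3M^{1/\alpha}}{2^{2\alpha+4+1/\alpha}\kappa^2n}\right)^{\frac{2\alpha}{1+2\alpha}}\wedge\frac{M^2}{4}\wedge\overline L^2\right].$$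
   Context: Natural family: $\nu$ $\sigma$-finite on $\mathscr Y$, $S$ measurable not $\nu$-a.e. constant, $I$ interval with nonempty interior where $A(\theta)=\log\int e^{\theta S}d\nu<\infty$, $Q_\theta$ with $\nu$-density $e^{S(y)\theta-A(\theta)}$; general parametrization: $u:J\to I$ continuous strictly monotone onto a non-degenerate interval $J$, $R_\gamma=Q_{u(\gamma)}$. $h$ is the Hellinger distance $h^2(P,R)=\frac12\int(\sqrt p-\sqrt r)^2d\mu$. $\mathcal H_\alpha(M)$ is the set of $\gamma:[0,1]\to J$ with $|\gamma(x)-\gamma(y)|\le M|x-y|^\alpha$. Data: $X_i=(W_i,Y_i)$, $i\le n$, i.i.d., $W_i\sim P_W$, $Y_i\mid W_i=w\sim R_{\gamma^\star(w)}$. Minimax risk: $\mathcal R_n(\mathcal H_\alpha(M))=\inf_{\widetilde\gamma}\sup_{\gamma^\star\in\mathcal H_\alpha(M)}\mathbb E\big[h^2(R_{\gamma^\star},R_{\widetilde\gamma})\big]$ where the infimum is over all estimators $\widetilde\gamma$ (measurable functions of $X_1,\ldots,X_n$ with values in functions $[0,1]\to J$) and $h^2(R_\gamma,R_{\gamma'})=\int_0^1h^2(R_{\gamma(w)},R_{\gamma'(w)})dP_W(w)$. *)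

theory Defs
  imports "HOL-Probability.Probability"
begin

definition logpart :: "'y measure \<Rightarrow> ('y \<Rightarrow> real) \<Rightarrow> real \<Rightarrow> real" where
  "logpart \<nu> S \<theta> = ln (\<integral>y. exp (\<theta> * S y) \<partial>\<nu>)"

definition expdens :: "'y measure \<Rightarrow> ('y \<Rightarrow> real) \<Rightarrow> real \<Rightarrow> 'y \<Rightarrow> real" where
  "expdens \<nu> S \<theta> y = exp (S y * \<theta> - logpart \<nu> S \<theta>)"

definition hellinger :: "'y measure \<Rightarrow> ('y \<Rightarrow> real) \<Rightarrow> ('y \<Rightarrow> real) \<Rightarrow> real" where
  "hellinger \<mu> p r = sqrt ((1/2) * (\<integral>y. (sqrt (p y) - sqrt (r y))^2 \<partial>\<mu>))"

definition hR :: "'y measure \<Rightarrow> ('y \<Rightarrow> real) \<Rightarrow> (real \<Rightarrow> real) \<Rightarrow> real \<Rightarrow> real \<Rightarrow> real" where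
  "hR \<nu> S u a b = hellinger \<nu> (expdens \<nu> S (u a)) (expdens \<nu> S (u b))"

definition holder_class :: "real \<Rightarrow> real \<Rightarrow> real set \<Rightarrow> (real \<Rightarrow> real) set" where
  "holder_class \<alpha> M J = {\<gamma>. (\<forall>x\<in>{0..1}. \<gamma> x \<in> J) \<and>
      (\<forall>x\<in>{0..1}. \<forall>y\<in>{0..1}. \<bar>\<gamma> x - \<gamma> y\<bar> \<le> M * \<bar>x - y\<bar> powr \<alpha>)}"

definition PW :: "real measure" where
  "PW = uniform_measure lborel {0..1}"

definition obs_dist :: "'y measure \<Rightarrow> ('y \<Rightarrow> real) \<Rightarrow> (real \<Rightarrow> real) \<Rightarrow> (real \<Rightarrow> real) \<Rightarrow> (real \<times> 'y) measure" where
  "obs_dist \<nu> S u \<gamma> = density (PW \<Otimes>\<^sub>M \<nu>) (\<lambda>(w, y). ennreal (expdens \<nu> S (u (\<gamma> w)) y))"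

definition sample_dist :: "nat \<Rightarrow> 'y measure \<Rightarrow> ('y \<Rightarrow> real) \<Rightarrow> (real \<Rightarrow> real) \<Rightarrow> (real \<Rightarrow> real) \<Rightarrow> (nat \<Rightarrow> real \<times> 'y) measure" where
  "sample_dist n \<nu> S u \<gamma> = PiM {..<n} (\<lambda>_. obs_dist \<nu> S u \<gamma>)"

definition estimators :: "nat \<Rightarrow> 'y measure \<Rightarrow> real set \<Rightarrow> ((nat \<Rightarrow> real \<times> 'y) \<Rightarrow> real \<Rightarrow> real) set" where
  "estimators n \<nu> J = {\<gamma>t.
      (\<lambda>(x, w). \<gamma>t x w) \<in> borel_measurable (PiM {..<n} (\<lambda>_. (borel \<Otimes>\<^sub>M \<nu>)) \<Otimes>\<^sub>M borel) \<and>
      (\<forall>x\<in>space (PiM {..<n} (\<lambda>_. (borel \<Otimes>\<^sub>M \<nu>))). \<forall>w\<in>{0..1}. \<gamma>t x w \<in> J)}"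

definition risk :: "nat \<Rightarrow> 'y measure \<Rightarrow> ('y \<Rightarrow> real) \<Rightarrow> (real \<Rightarrow> real) \<Rightarrow> (real \<Rightarrow> real)
    \<Rightarrow> ((nat \<Rightarrow> real \<times> 'y) \<Rightarrow> real \<Rightarrow> real) \<Rightarrow> ennreal" where
  "risk n \<nu> S u \<gamma>s \<gamma>t =
     (\<integral>\<^sup>+ x. (\<integral>\<^sup>+ w. ennreal ((hR \<nu> S u (\<gamma>s w) (\<gamma>t x w))\<^sup>2) \<partial>PW) \<partial>(sample_dist n \<nu> S u \<gamma>s))"

definition minimax_risk :: "nat \<Rightarrow> 'y measure \<Rightarrow> ('y \<Rightarrow> real) \<Rightarrow> (real \<Rightarrow> real) \<Rightarrow> real set
    \<Rightarrow> real \<Rightarrow> real \<Rightarrow> ennreal" where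
  "minimax_risk n \<nu> S u J \<alpha> M =
     (INF \<gamma>t\<in>estimators n \<nu> J. SUP \<gamma>s\<in>holder_class \<alpha> M J. risk n \<nu> S u \<gamma>s \<gamma>t)"

end

theory Submission
  imports Defs
begin

lemma choice:
  fixes M L \<kappa> \<alpha> :: real and n :: nat
  assumes M: "M > 0" and L: "L > 0" and k: "\<kappa> > 0" and a: "0 < \<alpha>" "\<alpha> \<le> 1" and n: "n \<ge> 1"
  defines "Q \<equiv> 3 * M powr (1 / \<alpha>) / (2 powr (2 * \<alpha> + 4 + 1 / \<alpha>) * \<kappa>^2 * real n)"
  defines "R \<equiv> Q powr (2 * \<alpha> / (1 + 2 * \<alpha>))"
  defines "A \<equiv> min R (min (M^2 / 4) (L^2))"
  shows "\<exists>m::nat. 1 \<le> m \<and> sqrt A * (2 * real m) powr \<alpha> \<le> M \<and>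
           real n * (\<kappa>^2 * ((sqrt A)^2 / (3 * real m))) \<le> 1/4"
proof -
  have Q0: "Q > 0" unfolding Q_def using M k n by auto
  have R0: "R > 0" unfolding R_def using Q0 by simp
  have A0: "A > 0" unfolding A_def using R0 M L by auto
  have AR: "A \<le> R" "A \<le> M^2 / 4" "A \<le> L^2" unfolding A_def by auto
  define uu where "uu = A / M^2"
  have u0: "0 < uu" unfolding uu_def using A0 M by simp
  have u4: "uu \<le> 1/4" unfolding uu_def using AR(2) M by (simp add: field_simps)
  define e where "e = 1 / (2 * \<alpha>)"
  have e0: "0 < e" unfolding e_def using a by simp
  define t where "t = uu powr e"
  have t0: "0 < t" unfolding t_def using u0 by simp
  have "t \<le> (1/4) powr e" unfolding t_def using u4 u0 e0 by (intro powr_mono2) auto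
  also have "(1/4::real) powr e = ((1/2) powr 2) powr e"
  proof -
    have "(1/2::real) powr 2 = (1/2) powr (real 2)" by simp
    also have "\<dots> = (1/2)^2" by (rule powr_realpow) simp
    finally show ?thesis by (simp add: power2_eq_square)
  qed
  also have "\<dots> = (1/2) powr (1 / \<alpha>)" unfolding powr_powr e_def using a by simp
  also have "\<dots> \<le> (1/2) powr 1" using a by (intro powr_mono') (auto simp: field_simps)
  finally have th: "t \<le> 1/2" by simp
  define y where "y = 1 / (2 * t)"
  have y1: "1 \<le> y" unfolding y_def using th t0 by (simp add: field_simps)
  define m where "m = nat \<lfloor>y\<rfloor>"
  have fl1: "1 \<le> \<lfloor>y\<rfloor>" using y1 by linarith
  have mr: "real m = of_int \<lfloor>y\<rfloor>" unfolding m_def using fl1 by simp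
  have m1: "1 \<le> m" unfolding m_def using fl1 by linarith
  have my: "real m \<le> y" unfolding mr by linarith
  have my2: "y / 2 < real m" unfolding mr using fl1 by linarith
  have tpa: "t powr \<alpha> = sqrt A / M"
  proof -
    have "t powr \<alpha> = uu powr (1/2)" unfolding t_def powr_powr e_def using a by simp
    also have "\<dots> = sqrt uu" using u0 by (simp add: powr_half_sqrt)
    also have "\<dots> = sqrt A / M" unfolding uu_def using M by (simp add: real_sqrt_divide)
    finally show ?thesis .
  qed
  have hol: "sqrt A * (2 * real m) powr \<alpha> \<le> M"
  proof -
    have "2 * real m \<le> 1 / t" using my t0 unfolding y_def by (simp add: field_simps)
    then have "(2 * real m) powr \<alpha> \<le> (1 / t) powr \<alpha>" using a by (intro powr_mono2) auto
    also have "(1 / t) powr \<alpha> = 1 / (t powr \<alpha>)" using t0 by (simp add: powr_divide)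
    also have "\<dots> = M / sqrt A" unfolding tpa by simp
    finally have "(2 * real m) powr \<alpha> \<le> M / sqrt A" .
    then have "sqrt A * (2 * real m) powr \<alpha> \<le> sqrt A * (M / sqrt A)" using A0 by (intro mult_left_mono) auto
    also have "\<dots> = M" using A0 by simp
    finally show ?thesis .
  qed
  have At: "A * t = A powr (1 + e) / M powr (1 / \<alpha>)"
  proof -
    have "t = A powr e / (M^2) powr e" unfolding t_def uu_def using A0 M by (simp add: powr_divide)
    also have "(M^2) powr e = M powr (1 / \<alpha>)"
    proof -
      have "(M^2) powr e = (M powr 2) powr e" using M by (simp add: powr_realpow)
      also have "\<dots> = M powr (1 / \<alpha>)" unfolding powr_powr e_def using a by simp
      finally show ?thesis .
    qed
    finally have "A * t = A * A powr e / M powr (1 / \<alpha>)" by simp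
    also have "A * A powr e = A powr (1 + e)" using A0 by (simp add: powr_add)
    finally show ?thesis .
  qed
  have "A powr (1 + e) \<le> R powr (1 + e)" using AR(1) A0 e0 by (intro powr_mono2) auto
  also have "R powr (1 + e) = Q"
  proof -
    have "1 + e = (1 + 2 * \<alpha>) / (2 * \<alpha>)" unfolding e_def using a by (simp add: field_simps)
    moreover have "1 + 2 * \<alpha> \<noteq> 0" using a by simp
    ultimately have ex1: "(2 * \<alpha> / (1 + 2 * \<alpha>)) * (1 + e) = 1" using a by simp
    show ?thesis unfolding R_def powr_powr ex1 using Q0 by simp
  qed
  finally have AQ: "A powr (1 + e) \<le> Q" .
  have "real n * \<kappa>^2 * (A * t) \<le> real n * \<kappa>^2 * (Q / M powr (1 / \<alpha>))"
    unfolding At using AQ M by (intro mult_left_mono divide_right_mono) auto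
  also have "real n * \<kappa>^2 * (Q / M powr (1 / \<alpha>)) = 3 / 2 powr (2 * \<alpha> + 4 + 1 / \<alpha>)"
    unfolding Q_def using M k n by (simp add: field_simps)
  also have "\<dots> \<le> 3 / 2 powr 4"
    using a by (intro divide_left_mono powr_mono) auto
  finally have key: "real n * \<kappa>^2 * (A * t) \<le> 3 / 16" by simp
  have "real n * (\<kappa>^2 * ((sqrt A)^2 / (3 * real m))) = real n * \<kappa>^2 * A / (3 * real m)"
    using A0 by simp
  also have "\<dots> \<le> real n * \<kappa>^2 * A * (4 * t) / 3"
  proof -
    have "1 / real m \<le> 4 * t" using my2 t0 m1 unfolding y_def by (simp add: field_simps)
    then have "real n * \<kappa>^2 * A * (1 / real m) \<le> real n * \<kappa>^2 * A * (4 * t)"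
      using A0 by (intro mult_left_mono) auto
    then show ?thesis by simp
  qed
  also have "\<dots> = 4 / 3 * (real n * \<kappa>^2 * (A * t))" by simp
  also have "\<dots> \<le> 4 / 3 * (3 / 16)" using key by (intro mult_left_mono) auto
  finally have xb: "real n * (\<kappa>^2 * ((sqrt A)^2 / (3 * real m))) \<le> 1/4" by simp
  show ?thesis using m1 hol xb by blast
qed

lemma sq_tri: "((x::real) - y)^2 / 2 \<le> (x - t)^2 + (y - t)^2"
proof -
  have "(x - t)^2 + (y - t)^2 - (x - y)^2 / 2 = (x + y - 2 * t)^2 / 2"
    by (simp add: power2_eq_square field_simps)
  moreover have "0 \<le> (x + y - 2 * t)^2" by simp
  ultimately show ?thesis by linarith
qed

locale fam =
  fixes \<nu> :: "'y measure" and S :: "'y \<Rightarrow> real" and I :: "real set"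
  assumes sf: "sigma_finite_measure \<nu>" and Smeas[measurable]: "S \<in> borel_measurable \<nu>"
    and nz: "\<not> (\<exists>c. AE y in \<nu>. S y = c)"
    and integ: "\<forall>\<theta>\<in>I. integrable \<nu> (\<lambda>y. exp (\<theta> * S y))"
begin

interpretation N: sigma_finite_measure \<nu> by (rule sf)

lemma Z_pos: assumes "\<theta> \<in> I" shows "0 < (\<integral>y. exp (\<theta> * S y) \<partial>\<nu>)"
proof -
  have i: "integrable \<nu> (\<lambda>y. exp (\<theta> * S y))" using integ assms by auto
  have ge: "0 \<le> (\<integral>y. exp (\<theta> * S y) \<partial>\<nu>)" by (rule integral_nonneg_AE) auto
  show ?thesis
  proof (rule ccontr)
    assume "\<not> ?thesis"
    then have "(\<integral>y. exp (\<theta> * S y) \<partial>\<nu>) = 0" using ge by auto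
    then have "AE y in \<nu>. exp (\<theta> * S y) = 0"
      using integral_nonneg_eq_0_iff_AE[OF i] by auto
    then have "AE y in \<nu>. S y = 0" by (rule AE_mp) auto
    then show False using nz by blast
  qed
qed

lemma expdens_eq: assumes "\<theta> \<in> I"
  shows "expdens \<nu> S \<theta> y = exp (\<theta> * S y) / (\<integral>y. exp (\<theta> * S y) \<partial>\<nu>)"
  using Z_pos[OF assms] unfolding expdens_def logpart_def
  by (simp add: exp_diff mult.commute)

lemma expdens_pos: "0 < expdens \<nu> S \<theta> y" unfolding expdens_def by simp

lemma expdens_meas[measurable]: "expdens \<nu> S \<theta> \<in> borel_measurable \<nu>"
  unfolding expdens_def by measurable

lemma logpart_meas[measurable]: "logpart \<nu> S \<in> borel_measurable borel"
proof -
  have "(\<lambda>\<theta>. \<integral>y. exp (\<theta> * S y) \<partial>\<nu>) \<in> borel_measurable borel"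
    by (rule N.borel_measurable_lebesgue_integral) measurable
  then show ?thesis unfolding logpart_def[abs_def] by measurable
qed

lemma expdens_meas2[measurable]: "(\<lambda>(\<theta>, y). expdens \<nu> S \<theta> y) \<in> borel_measurable (borel \<Otimes>\<^sub>M \<nu>)"
  unfolding expdens_def by measurable

lemma expdens_integrable: assumes "\<theta> \<in> I" shows "integrable \<nu> (expdens \<nu> S \<theta>)"
proof -
  have e: "expdens \<nu> S \<theta> = (\<lambda>y. exp (\<theta> * S y) / (\<integral>y. exp (\<theta> * S y) \<partial>\<nu>))"
    using expdens_eq[OF assms] by auto
  show ?thesis unfolding e using integ assms by auto
qed

lemma expdens_int1: assumes "\<theta> \<in> I" shows "(\<integral>y. expdens \<nu> S \<theta> y \<partial>\<nu>) = 1"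
  using Z_pos[OF assms] by (simp add: expdens_eq[OF assms])

abbreviation "pp \<theta> \<equiv> expdens \<nu> S \<theta>"

lemma sqrt_prod_integrable: assumes "a \<in> I" "b \<in> I"
  shows "integrable \<nu> (\<lambda>y. sqrt (pp a y * pp b y))"
proof (rule Bochner_Integration.integrable_bound[where f="\<lambda>y. pp a y + pp b y"])
  show "integrable \<nu> (\<lambda>y. pp a y + pp b y)"
    using expdens_integrable assms by auto
  show "(\<lambda>y. sqrt (pp a y * pp b y)) \<in> borel_measurable \<nu>" by measurable
  show "AE x in \<nu>. norm (sqrt (pp a x * pp b x)) \<le> norm (pp a x + pp b x)"
  proof (rule AE_I2)
    fix x
    have "sqrt (pp a x * pp b x) \<le> (pp a x + pp b x) / 2"
      by (rule arith_geo_mean_sqrt) (auto intro: less_imp_le expdens_pos)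
    moreover have "0 < pp a x" "0 < pp b x" by (auto intro: expdens_pos)
    ultimately show "norm (sqrt (pp a x * pp b x)) \<le> norm (pp a x + pp b x)" by simp
  qed
qed

lemma dsq_eq: "(sqrt (pp a y) - sqrt (pp b y))^2 = pp a y + pp b y - 2 * sqrt (pp a y * pp b y)"
proof -
  have "0 < pp a y" "0 < pp b y" by (auto intro: expdens_pos)
  then show ?thesis by (simp add: power2_eq_square algebra_simps real_sqrt_mult)
qed

lemma dsq_integrable: assumes "a \<in> I" "b \<in> I"
  shows "integrable \<nu> (\<lambda>y. (sqrt (pp a y) - sqrt (pp b y))^2)"
  unfolding dsq_eq using expdens_integrable[OF assms(1)] expdens_integrable[OF assms(2)]
    sqrt_prod_integrable[OF assms] by auto

lemma dsq_int: assumes "a \<in> I" "b \<in> I"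
  shows "(\<integral>y. (sqrt (pp a y) - sqrt (pp b y))^2 \<partial>\<nu>) = 2 - 2 * (\<integral>y. sqrt (pp a y * pp b y) \<partial>\<nu>)"
  unfolding dsq_eq using expdens_integrable[OF assms(1)] expdens_integrable[OF assms(2)]
    sqrt_prod_integrable[OF assms] expdens_int1[OF assms(1)] expdens_int1[OF assms(2)] by auto

lemma hell_sq: "(hellinger \<nu> (pp a) (pp b))^2 = (1/2) * (\<integral>y. (sqrt (pp a y) - sqrt (pp b y))^2 \<partial>\<nu>)"
proof -
  have "0 \<le> (\<integral>y. (sqrt (pp a y) - sqrt (pp b y))^2 \<partial>\<nu>)" by (rule integral_nonneg_AE) auto
  then show ?thesis unfolding hellinger_def by simp
qed

lemma hell_sq_aff: assumes "a \<in> I" "b \<in> I"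
  shows "(hellinger \<nu> (pp a) (pp b))^2 = 1 - (\<integral>y. sqrt (pp a y * pp b y) \<partial>\<nu>)"
  unfolding hell_sq dsq_int[OF assms] by simp

lemma hell_tri: assumes "a \<in> I" "b \<in> I" "t \<in> I"
  shows "(hellinger \<nu> (pp a) (pp b))^2 / 2 \<le> (hellinger \<nu> (pp a) (pp t))^2 + (hellinger \<nu> (pp b) (pp t))^2"
proof -
  have "(\<integral>y. (sqrt (pp a y) - sqrt (pp b y))^2 / 2 \<partial>\<nu>) \<le>
      (\<integral>y. (sqrt (pp a y) - sqrt (pp t y))^2 + (sqrt (pp b y) - sqrt (pp t y))^2 \<partial>\<nu>)"
  proof (rule integral_mono)
    show "integrable \<nu> (\<lambda>y. (sqrt (pp a y) - sqrt (pp b y))^2 / 2)"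
      using dsq_integrable[OF assms(1,2)] by auto
    show "integrable \<nu> (\<lambda>y. (sqrt (pp a y) - sqrt (pp t y))^2 + (sqrt (pp b y) - sqrt (pp t y))^2)"
      using dsq_integrable[OF assms(1,3)] dsq_integrable[OF assms(2,3)] by auto
    fix y
    show "(sqrt (pp a y) - sqrt (pp b y))^2 / 2 \<le> (sqrt (pp a y) - sqrt (pp t y))^2 + (sqrt (pp b y) - sqrt (pp t y))^2"
      by (rule sq_tri)
  qed
  then show ?thesis unfolding hell_sq
    using dsq_integrable[OF assms(1,2)] dsq_integrable[OF assms(1,3)] dsq_integrable[OF assms(2,3)]
    by simp
qed

lemma hell2_meas[measurable]:
  "(\<lambda>(a, b). (hellinger \<nu> (pp a) (pp b))^2) \<in> borel_measurable (borel \<Otimes>\<^sub>M borel)"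
proof -
  have "(\<lambda>ab. \<integral>y. (sqrt (pp (fst ab) y) - sqrt (pp (snd ab) y))^2 \<partial>\<nu>) \<in> borel_measurable (borel \<Otimes>\<^sub>M borel)"
    by (rule N.borel_measurable_lebesgue_integral) measurable
  then show ?thesis unfolding hell_sq by (simp add: case_prod_beta')
qed

end

lemma indicator_PiE_prod:
  assumes "x \<in> extensional I" "finite I"
  shows "(indicator (Pi\<^sub>E I A) x :: ennreal) = (\<Prod>i\<in>I. indicator (A i) (x i))"
proof (cases "x \<in> Pi\<^sub>E I A")
  case True then show ?thesis by (auto simp: indicator_def PiE_iff)
next
  case False
  then obtain i where "i \<in> I" "x i \<notin> A i" using assms by (auto simp: PiE_iff)
  then have "(\<Prod>i\<in>I. (indicator (A i) (x i) :: ennreal)) = 0"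
    using assms `i \<in> I` `x i \<notin> A i` by (intro prod_zero) (auto intro!: bexI[of _ i])
  then show ?thesis using False by simp
qed

lemma PiM_density:
  fixes B :: "'a measure" and f :: "'a \<Rightarrow> ennreal"
  assumes sfB: "sigma_finite_measure B" and fm[measurable]: "f \<in> borel_measurable B"
    and ps: "prob_space (density B f)" and fin: "finite I"
  shows "PiM I (\<lambda>_. density B f) = density (PiM I (\<lambda>_. B)) (\<lambda>x. \<Prod>i\<in>I. f (x i))"
proof -
  interpret P: product_sigma_finite "\<lambda>_. density B f"
    unfolding product_sigma_finite_def using ps prob_space_imp_sigma_finite by blast
  interpret PB: product_sigma_finite "\<lambda>_. B"
    unfolding product_sigma_finite_def using sfB by blast
  have sets_eq: "sets (PiM I (\<lambda>_. B)) = sets (PiM I (\<lambda>_. density B f))"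
    by (rule sets_PiM_cong) auto
  have sp: "space (PiM I (\<lambda>_. B)) = space (PiM I (\<lambda>_. density B f))"
    by (rule sets_eq_imp_space_eq[OF sets_eq])
  have "density (PiM I (\<lambda>_. B)) (\<lambda>x. \<Prod>i\<in>I. f (x i)) = PiM I (\<lambda>_. density B f)"
  proof (rule P.PiM_eqI[OF fin])
    show "sets (density (PiM I (\<lambda>_. B)) (\<lambda>x. \<Prod>i\<in>I. f (x i))) = sets (PiM I (\<lambda>_. density B f))"
      using sets_eq by simp
    fix A assume A: "\<And>i. i \<in> I \<Longrightarrow> A i \<in> sets (density B f)"
    then have A': "\<And>i. i \<in> I \<Longrightarrow> A i \<in> sets B" by simp
    have PiA: "Pi\<^sub>E I A \<in> sets (PiM I (\<lambda>_. B))"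
      using A' fin by (intro sets_PiM_I_finite) auto
    have "emeasure (density (PiM I (\<lambda>_. B)) (\<lambda>x. \<Prod>i\<in>I. f (x i))) (Pi\<^sub>E I A)
        = (\<integral>\<^sup>+ x. (\<Prod>i\<in>I. f (x i)) * indicator (Pi\<^sub>E I A) x \<partial>PiM I (\<lambda>_. B))"
      using PiA fin by (intro emeasure_density) (auto intro!: borel_measurable_prod_ennreal)
    also have "\<dots> = (\<integral>\<^sup>+ x. (\<Prod>i\<in>I. f (x i) * indicator (A i) (x i)) \<partial>PiM I (\<lambda>_. B))"
    proof (rule nn_integral_cong)
      fix x assume "x \<in> space (PiM I (\<lambda>_. B))"
      then have "x \<in> extensional I" by (auto simp: space_PiM PiE_iff)
      then show "(\<Prod>i\<in>I. f (x i)) * indicator (Pi\<^sub>E I A) x = (\<Prod>i\<in>I. f (x i) * indicator (A i) (x i))"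
        using fin by (simp add: indicator_PiE_prod prod.distrib)
    qed
    also have "\<dots> = (\<Prod>i\<in>I. \<integral>\<^sup>+ y. f y * indicator (A i) y \<partial>B)"
      using fin A' by (intro PB.product_nn_integral_prod) auto
    also have "\<dots> = (\<Prod>i\<in>I. emeasure (density B f) (A i))"
      using A' by (intro prod.cong refl) (simp add: emeasure_density)
    finally show "emeasure (density (PiM I (\<lambda>_. B)) (\<lambda>x. \<Prod>i\<in>I. f (x i))) (Pi\<^sub>E I A) =
        (\<Prod>i\<in>I. emeasure (density B f) (A i))" .
  qed
  then show ?thesis by simp
qed

lemma amgm_t: assumes "0 \<le> a" "0 \<le> b" "0 < t"
  shows "sqrt (a * b) \<le> t / 2 * a + b / (2 * t)"
proof -
  have "sqrt ((t * a) * (b / t)) \<le> (t * a + b / t) / 2"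
    by (rule arith_geo_mean_sqrt) (use assms in auto)
  moreover have "(t * a) * (b / t) = a * b" using assms by simp
  ultimately show ?thesis by (simp add: field_simps)
qed

lemma sqrt_le_min_max: assumes "0 \<le> a" "0 \<le> b" "0 < t"
  shows "sqrt (a * b) \<le> t / 2 * min a b + (a + b) / (2 * t)"
proof -
  have "sqrt (a * b) = sqrt (min a b * max a b)" by (simp add: min_def max_def mult.commute)
  also have "\<dots> \<le> t / 2 * min a b + max a b / (2 * t)"
    by (rule amgm_t) (use assms in auto)
  also have "\<dots> \<le> t / 2 * min a b + (a + b) / (2 * t)"
    using assms by (intro add_left_mono divide_right_mono) auto
  finally show ?thesis .
qed

lemma affinity_min:
  fixes p q :: "'a \<Rightarrow> real"
  assumes [measurable]: "p \<in> borel_measurable N" "q \<in> borel_measurable N"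
    and nn: "\<And>x. 0 \<le> p x" "\<And>x. 0 \<le> q x"
    and ip: "(\<integral>\<^sup>+ x. ennreal (p x) \<partial>N) \<le> 1" and iq: "(\<integral>\<^sup>+ x. ennreal (q x) \<partial>N) \<le> 1"
  shows "(\<integral>\<^sup>+ x. ennreal (sqrt (p x * q x)) \<partial>N)^2 \<le> 2 * (\<integral>\<^sup>+ x. ennreal (min (p x) (q x)) \<partial>N)"
proof -
  define \<rho> where "\<rho> = (\<integral>\<^sup>+ x. ennreal (sqrt (p x * q x)) \<partial>N)"
  define m where "m = (\<integral>\<^sup>+ x. ennreal (min (p x) (q x)) \<partial>N)"
  have key: "\<rho> \<le> ennreal (t / 2) * m + ennreal (1 / t)" if t: "0 < t" for t
  proof -
    have "\<rho> \<le> (\<integral>\<^sup>+ x. ennreal (t / 2) * ennreal (min (p x) (q x)) + ennreal (1 / (2 * t)) * (ennreal (p x) + ennreal (q x)) \<partial>N)"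
      unfolding \<rho>_def
    proof (rule nn_integral_mono)
      fix x
      have "sqrt (p x * q x) \<le> t / 2 * min (p x) (q x) + (1 / (2 * t)) * (p x + q x)"
        using sqrt_le_min_max[OF nn(1)[of x] nn(2)[of x] t] by simp
      then have "ennreal (sqrt (p x * q x)) \<le> ennreal (t / 2 * min (p x) (q x) + (1 / (2 * t)) * (p x + q x))"
        by (rule ennreal_leI)
      also have "\<dots> = ennreal (t / 2) * ennreal (min (p x) (q x)) + ennreal (1 / (2 * t)) * (ennreal (p x) + ennreal (q x))"
      proof -
        have px: "0 \<le> p x" "0 \<le> q x" using nn by auto
        have e2: "ennreal (p x) + ennreal (q x) = ennreal (p x + q x)" using px by simp
        have e1: "ennreal (t/2) * ennreal (min (p x) (q x)) = ennreal (t/2 * min (p x) (q x))"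
          by (rule ennreal_mult[symmetric]) (use t px in auto)
        have e3: "ennreal (1/(2*t)) * ennreal (p x + q x) = ennreal (1/(2*t) * (p x + q x))"
          by (rule ennreal_mult[symmetric]) (use t px in auto)
        have e4: "ennreal (t/2 * min (p x) (q x)) + ennreal (1/(2*t) * (p x + q x)) = ennreal (t/2 * min (p x) (q x) + 1/(2*t) * (p x + q x))"
          by (rule ennreal_plus[symmetric]) (use t px in auto)
        show ?thesis unfolding e2 e1 e3 e4 ..
      qed
      finally show "ennreal (sqrt (p x * q x)) \<le> ennreal (t / 2) * ennreal (min (p x) (q x)) + ennreal (1 / (2 * t)) * (ennreal (p x) + ennreal (q x))" .
    qed
    also have "\<dots> = ennreal (t / 2) * m + ennreal (1 / (2 * t)) * ((\<integral>\<^sup>+ x. ennreal (p x) \<partial>N) + (\<integral>\<^sup>+ x. ennreal (q x) \<partial>N))"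
      unfolding m_def by (simp add: nn_integral_add nn_integral_cmult)
    also have "\<dots> \<le> ennreal (t / 2) * m + ennreal (1 / (2 * t)) * 2"
      using add_mono[OF ip iq] by (intro add_left_mono mult_left_mono) auto
    also have "ennreal (1 / (2 * t)) * 2 = ennreal (1 / t)"
    proof -
      have "ennreal (1 / (2 * t)) * 2 = ennreal (1 / (2 * t) * 2)"
        by (subst ennreal_mult) (use t in auto)
      also have "1 / (2 * t) * 2 = 1 / t" using t by simp
      finally show ?thesis .
    qed
    finally show ?thesis .
  qed
  have mfin: "m \<le> 1"
  proof -
    have "m \<le> (\<integral>\<^sup>+ x. ennreal (p x) \<partial>N)" unfolding m_def
      by (rule nn_integral_mono) (rule ennreal_leI, simp)
    then show ?thesis using ip by simp
  qed
  then have mtop: "m \<noteq> \<top>" by (auto simp: top_unique)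
  have "\<rho> \<le> ennreal (1/2) * m + ennreal 1" using key[of 1] by simp
  then have rtop: "\<rho> \<noteq> \<top>" using mtop by (auto simp: top_unique ennreal_mult_eq_top_iff)
  obtain r where r: "\<rho> = ennreal r" "0 \<le> r" using rtop by (cases \<rho>) auto
  obtain mm where mm: "m = ennreal mm" "0 \<le> mm" using mtop by (cases m) auto
  have "r^2 \<le> 2 * mm"
  proof (cases "r = 0")
    case True then show ?thesis using mm by simp
  next
    case False
    then have rp: "0 < r" using r by simp
    have "ennreal r \<le> ennreal (2 / r / 2) * ennreal mm + ennreal (1 / (2 / r))"
      using key[of "2 / r"] rp r mm by simp
    also have "\<dots> = ennreal (mm / r + r / 2)" using rp mm
      by (simp add: ennreal_mult[symmetric] ennreal_plus[symmetric] del: ennreal_plus)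
    finally have "r \<le> mm / r + r / 2" using rp mm by (subst (asm) ennreal_le_iff) auto
    then have "r * r \<le> (mm / r + r / 2) * r" using rp by (intro mult_right_mono) auto
    then show ?thesis using rp by (simp add: field_simps power2_eq_square)
  qed
  then have "ennreal (r^2) \<le> ennreal (2 * mm)" by (rule ennreal_leI)
  then show ?thesis unfolding \<rho>_def[symmetric] m_def[symmetric] r mm
  proof -
    have "(ennreal r)^2 = ennreal (r^2)" using r by (simp add: ennreal_power)
    moreover have "2 * ennreal mm = ennreal (2 * mm)" using mm by (simp add: ennreal_mult)
    ultimately show "(ennreal r)^2 \<le> 2 * ennreal mm" using \<open>ennreal (r^2) \<le> ennreal (2 * mm)\<close> by simp
  qed
qed

definition fr :: "real \<Rightarrow> real" where
  "fr z = min (z - of_int \<lfloor>z\<rfloor>) (of_int \<lfloor>z\<rfloor> + 1 - z)"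

lemma fr_nonneg: "0 \<le> fr z"
  unfolding fr_def by (auto simp: min_def)

lemma fr_le: "fr z \<le> 1/2"
  unfolding fr_def by (auto simp: min_def)

lemma fr_same: assumes "\<lfloor>z\<rfloor> = \<lfloor>s\<rfloor>" shows "\<bar>fr z - fr s\<bar> \<le> \<bar>z - s\<bar>"
  unfolding fr_def using assms by (auto simp: min_def abs_if)

lemma fr_diff: assumes "\<lfloor>z\<rfloor> \<noteq> \<lfloor>s\<rfloor>" shows "fr z \<le> \<bar>z - s\<bar>"
proof -
  have f: "of_int \<lfloor>z\<rfloor> \<le> z" "z < of_int \<lfloor>z\<rfloor> + 1" "of_int \<lfloor>s\<rfloor> \<le> s" "s < of_int \<lfloor>s\<rfloor> + 1"
    by linarith+
  have m1: "fr z \<le> z - of_int \<lfloor>z\<rfloor>" "fr z \<le> of_int \<lfloor>z\<rfloor> + 1 - z" unfolding fr_def by auto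
  show ?thesis
  proof (cases "\<lfloor>z\<rfloor> < \<lfloor>s\<rfloor>")
    case True
    then have "of_int \<lfloor>z\<rfloor> + 1 \<le> (of_int \<lfloor>s\<rfloor> :: real)" by linarith
    then show ?thesis using f m1 by linarith
  next
    case False
    then have "\<lfloor>s\<rfloor> < \<lfloor>z\<rfloor>" using assms by auto
    then have "of_int \<lfloor>s\<rfloor> + 1 \<le> (of_int \<lfloor>z\<rfloor> :: real)" by linarith
    then show ?thesis using f m1 by linarith
  qed
qed

definition psi :: "real \<Rightarrow> real \<Rightarrow> nat set \<Rightarrow> real \<Rightarrow> real" where
  "psi m H \<omega> w = (if \<lfloor>m * w\<rfloor> \<in> int ` \<omega> then 2 * H * fr (m * w) else 0)"

lemma psi_nonneg: "0 \<le> H \<Longrightarrow> 0 \<le> psi m H \<omega> w"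
  unfolding psi_def using fr_nonneg by auto

lemma psi_le: assumes "0 \<le> H" shows "psi m H \<omega> w \<le> H"
proof -
  have "H * (2 * fr (m * w)) \<le> H * 1" using fr_le[of "m * w"] assms by (intro mult_left_mono) auto
  then show ?thesis unfolding psi_def using assms by auto
qed

lemma psi_lip: assumes H: "0 \<le> H" and m: "0 \<le> m"
  shows "\<bar>psi m H \<omega> x - psi m H \<omega> y\<bar> \<le> 2 * H * (m * \<bar>x - y\<bar>)"
proof -
  have "\<bar>m * x - m * y\<bar> = \<bar>m\<bar> * \<bar>x - y\<bar>" by (simp add: abs_mult[symmetric] right_diff_distrib)
  then have e: "m * \<bar>x - y\<bar> = \<bar>m * x - m * y\<bar>" using m by simp
  show ?thesis
  proof (cases "\<lfloor>m * x\<rfloor> = \<lfloor>m * y\<rfloor>")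
    case True
    have "\<bar>fr (m*x) - fr (m*y)\<bar> \<le> \<bar>m * x - m * y\<bar>" by (rule fr_same[OF True])
    then have "2 * H * \<bar>fr (m*x) - fr (m*y)\<bar> \<le> 2 * H * \<bar>m * x - m * y\<bar>"
      using H by (intro mult_left_mono) auto
    then show ?thesis unfolding psi_def e using True H
      by (auto simp: abs_mult right_diff_distrib[symmetric])
  next
    case False
    have a: "fr (m*x) \<le> \<bar>m * x - m * y\<bar>" by (rule fr_diff[OF False])
    have b: "fr (m*y) \<le> \<bar>m * x - m * y\<bar>" using fr_diff[of "m*y" "m*x"] False by (simp add: abs_minus_commute)
    have "2 * H * fr (m*x) \<le> 2 * H * \<bar>m * x - m * y\<bar>" "2 * H * fr (m*y) \<le> 2 * H * \<bar>m * x - m * y\<bar>"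
      using a b H by (auto intro: mult_left_mono)
    moreover have "0 \<le> 2 * H * fr (m*x)" "0 \<le> 2 * H * fr (m*y)" using H fr_nonneg by auto
    ultimately show ?thesis unfolding psi_def e by auto
  qed
qed

lemma min_powr: assumes "0 \<le> (t::real)" "0 < \<alpha>" "\<alpha> \<le> 1" shows "min 1 t \<le> t powr \<alpha>"
proof (cases "t \<le> 1")
  case True
  have "t powr 1 \<le> t powr \<alpha>" using powr_mono'[of \<alpha> 1 t] assms True by auto
  then show ?thesis using assms True by auto
next
  case False
  then show ?thesis using ge_one_powr_ge_zero[of t \<alpha>] assms by auto
qed

lemma psi_holder: assumes H: "0 \<le> H" and m: "0 < m" and a: "0 < \<alpha>" "\<alpha> \<le> 1"
  and HM: "H * (2 * m) powr \<alpha> \<le> M"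
  shows "\<bar>psi m H \<omega> x - psi m H \<omega> y\<bar> \<le> M * \<bar>x - y\<bar> powr \<alpha>"
proof -
  let ?t = "2 * m * \<bar>x - y\<bar>"
  have d1: "\<bar>psi m H \<omega> x - psi m H \<omega> y\<bar> \<le> H * ?t"
    using psi_lip[OF H, of m \<omega> x y] m by (simp add: mult.assoc)
  have d2: "\<bar>psi m H \<omega> x - psi m H \<omega> y\<bar> \<le> H"
    using psi_nonneg[OF H, of m \<omega> x] psi_le[OF H, of m \<omega> x] psi_nonneg[OF H, of m \<omega> y] psi_le[OF H, of m \<omega> y]
    by auto
  have "\<bar>psi m H \<omega> x - psi m H \<omega> y\<bar> \<le> H * min 1 ?t"
    using d1 d2 by (auto simp: min_def)
  also have "\<dots> \<le> H * ?t powr \<alpha>"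
    using min_powr[of ?t \<alpha>] a m H by (intro mult_left_mono) auto
  also have "\<dots> = H * (2 * m) powr \<alpha> * \<bar>x - y\<bar> powr \<alpha>"
    using m by (simp add: powr_mult)
  also have "\<dots> \<le> M * \<bar>x - y\<bar> powr \<alpha>"
    using HM by (intro mult_right_mono) auto
  finally show ?thesis .
qed

lemma cube_int:
  fixes m c d :: real
  assumes "lo \<le> hi"
  shows "((\<lambda>w. 3 * c * m * (m * w - d)^2) has_integral (c * (m * hi - d)^3 - c * (m * lo - d)^3)) {lo..hi}"
proof -
  have "((\<lambda>w. 3 * c * m * (m * w - d)^2) has_integral ((\<lambda>w. c * (m * w - d)^3) hi - (\<lambda>w. c * (m * w - d)^3) lo)) {lo..hi}"
  proof (rule fundamental_theorem_of_calculus[OF assms])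
    fix x assume "x \<in> {lo..hi}"
    have "((\<lambda>w. c * (m * w - d)^3) has_real_derivative 3 * c * m * (m * x - d)^2) (at x)"
      by (auto intro!: derivative_eq_intros simp: power2_eq_square)
    then show "((\<lambda>w. c * (m * w - d)^3) has_vector_derivative 3 * c * m * (m * x - d)^2) (at x within {lo..hi})"
      by (simp add: has_real_derivative_iff_has_vector_derivative[symmetric] has_field_derivative_at_within)
  qed
  then show ?thesis by simp
qed

lemma tent_integral:
  fixes m H :: real and j :: nat
  assumes m: "0 < m"
  shows "(\<integral>\<^sup>+ w. ennreal (indicator {w. \<lfloor>m * w\<rfloor> = int j} w * (2 * H * fr (m * w))^2) \<partial>lborel)
         = ennreal (H^2 / (3 * m))"
proof -
  define lo where "lo = real j / m"
  define mid where "mid = (real j + 1/2) / m"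
  define hi where "hi = (real j + 1) / m"
  have lm: "lo \<le> mid" "mid \<le> hi" using m unfolding lo_def mid_def hi_def by (auto simp: divide_right_mono)
  let ?f = "\<lambda>w. (2 * H * fr (m * w))^2"
  have fl1: "\<lfloor>m * w\<rfloor> = int j" if "lo \<le> w" "w < hi" for w
  proof -
    have "real j \<le> m * w" "m * w < real j + 1" using that m unfolding lo_def hi_def
      by (auto simp: field_simps)
    then show ?thesis by linarith
  qed
  have A: "(?f has_integral (H^2 / (6 * m))) {lo..mid}"
  proof -
    have "((\<lambda>w. 3 * (4 * H^2 / (3 * m)) * m * (m * w - real j)^2) has_integral
        ((4 * H^2 / (3 * m)) * (m * mid - real j)^3 - (4 * H^2 / (3 * m)) * (m * lo - real j)^3)) {lo..mid}"
      by (rule cube_int[OF lm(1)])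
    moreover have "(4 * H^2 / (3 * m)) * (m * mid - real j)^3 - (4 * H^2 / (3 * m)) * (m * lo - real j)^3 = H^2 / (6 * m)"
      using m unfolding mid_def lo_def by (simp add: field_simps power3_eq_cube)
    ultimately have I: "((\<lambda>w. 3 * (4 * H^2 / (3 * m)) * m * (m * w - real j)^2) has_integral (H^2 / (6 * m))) {lo..mid}"
      by simp
    show ?thesis
    proof (rule has_integral_eq[OF _ I])
      fix w assume w: "w \<in> {lo..mid}"
      have "mid < hi" using m unfolding mid_def hi_def by (simp add: divide_strict_right_mono)
      then have "w < hi" using w by auto
      then have fl: "\<lfloor>m * w\<rfloor> = int j" using fl1 w by auto
      have "m * w \<le> real j + 1/2" using w m unfolding mid_def by (auto simp: field_simps)
      then have e: "fr (m * w) = m * w - real j" unfolding fr_def fl by (auto simp: min_def)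
      show "3 * (4 * H^2 / (3 * m)) * m * (m * w - real j)^2 = ?f w"
        unfolding e using m by (simp add: power2_eq_square field_simps)
    qed
  qed
  have B: "(?f has_integral (H^2 / (6 * m))) {mid..hi}"
  proof -
    have "((\<lambda>w. 3 * (- 4 * H^2 / (3 * m)) * (-m) * ((-m) * w - (- real j - 1))^2) has_integral
        ((- 4 * H^2 / (3 * m)) * ((-m) * hi - (- real j - 1))^3 - (- 4 * H^2 / (3 * m)) * ((-m) * mid - (- real j - 1))^3)) {mid..hi}"
      by (rule cube_int[OF lm(2)])
    moreover have "(- 4 * H^2 / (3 * m)) * ((-m) * hi - (- real j - 1))^3 - (- 4 * H^2 / (3 * m)) * ((-m) * mid - (- real j - 1))^3 = H^2 / (6 * m)"
      using m unfolding mid_def hi_def by (simp add: field_simps power3_eq_cube)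
    ultimately have I: "((\<lambda>w. 3 * (- 4 * H^2 / (3 * m)) * (-m) * ((-m) * w - (- real j - 1))^2) has_integral (H^2 / (6 * m))) {mid..hi}"
      by simp
    show ?thesis
    proof (rule has_integral_eq[OF _ I])
      fix w assume w: "w \<in> {mid..hi}"
      have e: "fr (m * w) = real j + 1 - m * w"
      proof (cases "w = hi")
        case True
        then have "m * w = real j + 1" using m unfolding hi_def by simp
        then have "\<lfloor>m * w\<rfloor> = int j + 1" by simp
        then show ?thesis unfolding fr_def using \<open>m * w = real j + 1\<close> by simp
      next
        case False
        then have "w < hi" using w by auto
        moreover have "lo \<le> w" using w lm by auto
        ultimately have fl: "\<lfloor>m * w\<rfloor> = int j" using fl1 by auto
        have "real j + 1/2 \<le> m * w" using w m unfolding mid_def by (auto simp: field_simps)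
        then show ?thesis unfolding fr_def fl by (auto simp: min_def)
      qed
      show "3 * (- 4 * H^2 / (3 * m)) * (-m) * ((-m) * w - (- real j - 1))^2 = ?f w"
        unfolding e using m by (simp add: power2_eq_square field_simps)
    qed
  qed
  have C: "(?f has_integral (H^2 / (3 * m))) {lo..hi}"
    using has_integral_combine[OF lm A B] by simp
  have D: "(\<integral>\<^sup>+ w. ennreal (indicator {lo..hi} w * ?f w) \<partial>lborel) = ennreal (H^2 / (3 * m))"
    by (rule nn_integral_has_integral_lebesgue[OF _ C]) simp
  have E: "indicator {w. \<lfloor>m * w\<rfloor> = int j} w * ?f w = indicator {lo..hi} w * ?f w" for w
  proof (cases "w \<in> {lo..hi}")
    case True
    show ?thesis
    proof (cases "w = hi")
      case True
      then have "m * w = real j + 1" using m unfolding hi_def by simp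
      then have "\<lfloor>m * w\<rfloor> = int j + 1" by simp
      moreover have "fr (m * w) = 0" unfolding fr_def using \<open>m * w = real j + 1\<close> by simp
      ultimately show ?thesis by (simp add: indicator_def)
    next
      case False
      then have "\<lfloor>m * w\<rfloor> = int j" using fl1 \<open>w \<in> {lo..hi}\<close> by auto
      then show ?thesis using \<open>w \<in> {lo..hi}\<close> by (simp add: indicator_def)
    qed
  next
    case False
    have "\<lfloor>m * w\<rfloor> \<noteq> int j"
    proof
      assume "\<lfloor>m * w\<rfloor> = int j"
      then have "real j \<le> m * w" "m * w < real j + 1" by linarith+
      then have "lo \<le> w" "w \<le> hi" using m unfolding lo_def hi_def by (auto simp: field_simps)
      then show False using False by auto
    qed
    then show ?thesis using False by (simp add: indicator_def)
  qed
  show ?thesis unfolding E D ..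
qed

lemma PW_prob: "prob_space PW"
  unfolding PW_def by (rule prob_space_uniform_measure) auto

lemma sets_PW[simp, measurable_cong]: "sets PW = sets borel"
  unfolding PW_def by simp

lemma space_PW[simp]: "space PW = UNIV"
  unfolding PW_def by simp

lemma nn_integral_PW:
  assumes [measurable]: "f \<in> borel_measurable borel"
  shows "(\<integral>\<^sup>+ w. f w \<partial>PW) = (\<integral>\<^sup>+ w. f w * indicator {0..1} w \<partial>lborel)"
  unfolding PW_def by (subst nn_integral_uniform_measure) (auto simp: divide_ennreal_def)

lemma PW_sf: "sigma_finite_measure PW"
  using PW_prob prob_space_imp_sigma_finite by blast

locale main = fam \<nu> S I for \<nu> :: "'y measure" and S I +
  fixes J u a b cK \<kappa>
  assumes Jint: "is_interval J" and ucont: "continuous_on J u" and uJ: "u ` J = I"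
   and kpos: "\<kappa> > 0" and lip: "\<forall>g\<in>J. \<forall>g'\<in>J. hR \<nu> S u g g' \<le> \<kappa> * \<bar>g - g'\<bar>"
   and KJ: "{a..b} \<subseteq> J" and ab: "a < b" and cKpos: "cK > 0"
   and low: "\<forall>g\<in>{a..b}. \<forall>g'\<in>{a..b}. hR \<nu> S u g g' \<ge> cK * \<bar>g - g'\<bar>"
begin

interpretation N: sigma_finite_measure \<nu> by (rule sf)

lemma aJ: "a \<in> J" using KJ ab by auto

definition uu where "uu t = (if t \<in> J then u t else u a)"

lemma uu_meas[measurable]: "uu \<in> borel_measurable borel"
  unfolding uu_def
  by (rule borel_measurable_continuous_on_if)
     (auto intro: real_interval_borel_measurable Jint ucont continuous_on_const)

lemma uu_I: "uu t \<in> I" using uJ aJ unfolding uu_def by auto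

lemma uu_eq: "t \<in> J \<Longrightarrow> uu t = u t" unfolding uu_def by simp

definition hh where "hh s t = (hellinger \<nu> (pp (uu s)) (pp (uu t)))^2"

lemma hh_meas[measurable]: "(\<lambda>(s, t). hh s t) \<in> borel_measurable (borel \<Otimes>\<^sub>M borel)"
proof -
  have "(\<lambda>p. (\<lambda>(a, b). (hellinger \<nu> (pp a) (pp b))^2) (uu (fst p), uu (snd p))) \<in> borel_measurable (borel \<Otimes>\<^sub>M borel)"
    by (rule measurable_compose[OF _ hell2_meas]) measurable
  then show ?thesis unfolding hh_def by (simp add: case_prod_beta')
qed

lemma hh_eq: "s \<in> J \<Longrightarrow> t \<in> J \<Longrightarrow> hh s t = (hR \<nu> S u s t)^2"
  unfolding hh_def hR_def by (simp add: uu_eq)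

lemma hh_tri: "hh s s' / 2 \<le> hh s t + hh s' t"
  unfolding hh_def by (rule hell_tri) (auto intro: uu_I)

lemma hh_aff: "(\<integral>y. sqrt (pp (uu s) y * pp (uu t) y) \<partial>\<nu>) = 1 - hh s t"
  unfolding hh_def using hell_sq_aff[OF uu_I uu_I] by simp

lemma hh_nonneg: "0 \<le> hh s t" unfolding hh_def by simp

definition gam :: "nat \<Rightarrow> real \<Rightarrow> nat set \<Rightarrow> real \<Rightarrow> real" where
  "gam m H \<omega> w = a + psi (real m) H \<omega> w"

lemma gam_meas[measurable]: "gam m H \<omega> \<in> borel_measurable borel"
  unfolding gam_def psi_def fr_def by measurable

lemma gam_K: assumes "0 \<le> H" "H \<le> b - a" shows "gam m H \<omega> w \<in> {a..b}"
proof -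
  have "0 \<le> psi (real m) H \<omega> w" "psi (real m) H \<omega> w \<le> H"
    using psi_nonneg[OF assms(1)] psi_le[OF assms(1)] by auto
  then show ?thesis using assms unfolding gam_def by auto
qed

lemma gam_J: assumes "0 \<le> H" "H \<le> b - a" shows "gam m H \<omega> w \<in> J"
  using gam_K[OF assms] KJ by auto

lemma gam_holder: assumes "0 \<le> H" "H \<le> b - a" "0 < m" "0 < \<alpha>" "\<alpha> \<le> 1"
  "H * (2 * real m) powr \<alpha> \<le> M"
  shows "gam m H \<omega> \<in> holder_class \<alpha> M J"
  unfolding holder_class_def
proof (intro CollectI conjI ballI)
  fix x show "gam m H \<omega> x \<in> J" by (rule gam_J[OF assms(1,2)])
next
  fix x y
  show "\<bar>gam m H \<omega> x - gam m H \<omega> y\<bar> \<le> M * \<bar>x - y\<bar> powr \<alpha>"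
    unfolding gam_def using psi_holder[OF assms(1) _ assms(4,5,6)] assms(3) by simp
qed

end

locale hyp = main +
  fixes m :: nat and H :: real and n :: nat
  assumes m1: "1 \<le> m" and H0: "0 \<le> H" and Hab: "H \<le> b - a"
begin

interpretation N: sigma_finite_measure \<nu> by (rule sf)
interpretation PWp: prob_space PW by (rule PW_prob)

abbreviation "B \<equiv> PW \<Otimes>\<^sub>M \<nu>"
abbreviation "Bn \<equiv> PiM {..<n} (\<lambda>_. B)"

lemma B_sf: "sigma_finite_measure B"
  by (rule sigma_finite_pair_measure[OF PW_sf sf])

interpretation BB: sigma_finite_measure B by (rule B_sf)
interpretation PB: product_sigma_finite "\<lambda>_. B"
  unfolding product_sigma_finite_def using B_sf by blast

definition fd where
  "fd \<omega> z = expdens \<nu> S (uu (gam m H \<omega> (fst z))) (snd z)"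

lemma fd_meas[measurable]: "fd \<omega> \<in> borel_measurable B"
proof -
  have "(\<lambda>z. (\<lambda>(\<theta>, y). expdens \<nu> S \<theta> y) (uu (gam m H \<omega> (fst z)), snd z)) \<in> borel_measurable B"
    by (rule measurable_compose[OF _ expdens_meas2]) measurable
  then show ?thesis unfolding fd_def[abs_def] by simp
qed

lemma fd_pos: "0 < fd \<omega> z" unfolding fd_def by (rule expdens_pos)

lemma fd_nonneg: "0 \<le> fd \<omega> z" by (rule less_imp_le[OF fd_pos])

lemma fd_inner: "(\<integral>\<^sup>+ y. ennreal (fd \<omega> (w, y)) \<partial>\<nu>) = 1"
proof -
  have "(\<integral>\<^sup>+ y. ennreal (fd \<omega> (w, y)) \<partial>\<nu>) = (\<integral>\<^sup>+ y. ennreal (expdens \<nu> S (uu (gam m H \<omega> w)) y) \<partial>\<nu>)"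
    by (simp add: fd_def)
  also have "\<dots> = ennreal (\<integral>y. expdens \<nu> S (uu (gam m H \<omega> w)) y \<partial>\<nu>)"
    by (rule nn_integral_eq_integral[OF expdens_integrable[OF uu_I]]) (auto intro: less_imp_le expdens_pos)
  also have "\<dots> = 1" using expdens_int1[OF uu_I] by simp
  finally show ?thesis .
qed

lemma fd_int: "(\<integral>\<^sup>+ z. ennreal (fd \<omega> z) \<partial>B) = 1"
proof -
  have "(\<integral>\<^sup>+ z. ennreal (fd \<omega> z) \<partial>B) = (\<integral>\<^sup>+ w. \<integral>\<^sup>+ y. ennreal (fd \<omega> (w, y)) \<partial>\<nu> \<partial>PW)"
    by (rule N.nn_integral_fst[symmetric]) measurable
  also have "\<dots> = (\<integral>\<^sup>+ w. 1 \<partial>PW)" by (simp add: fd_inner)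
  also have "\<dots> = 1" using PWp.emeasure_space_1 by simp
  finally show ?thesis .
qed

lemma fd_prob: "prob_space (density B (\<lambda>z. ennreal (fd \<omega> z)))"
proof
  show "emeasure (density B (\<lambda>z. ennreal (fd \<omega> z))) (space (density B (\<lambda>z. ennreal (fd \<omega> z)))) = 1"
  proof -
    have "emeasure (density B (\<lambda>z. ennreal (fd \<omega> z))) (space B) = (\<integral>\<^sup>+ z. ennreal (fd \<omega> z) * indicator (space B) z \<partial>B)"
      by (rule emeasure_density[OF _ sets.top]) auto
    also have "\<dots> = (\<integral>\<^sup>+ z. ennreal (fd \<omega> z) \<partial>B)"
      by (rule nn_integral_cong) auto
    finally show ?thesis using fd_int by simp
  qed
qed

lemma obs_eq: "obs_dist \<nu> S u (gam m H \<omega>) = density B (\<lambda>z. ennreal (fd \<omega> z))"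
proof -
  have "(\<lambda>(w, y). ennreal (expdens \<nu> S (u (gam m H \<omega> w)) y)) = (\<lambda>z. ennreal (fd \<omega> z))"
    unfolding fd_def using uu_eq[OF gam_J[OF H0 Hab]] by (auto simp: fun_eq_iff)
  then show ?thesis unfolding obs_dist_def by simp
qed

definition Pd where
  "Pd \<omega> x = (\<Prod>i\<in>{..<n}. fd \<omega> (x i))"

lemma Pd_meas[measurable]: "Pd \<omega> \<in> borel_measurable Bn"
  unfolding Pd_def by measurable

lemma Pd_nonneg: "0 \<le> Pd \<omega> x"
  unfolding Pd_def by (rule prod_nonneg) (rule fd_nonneg)

lemma sample_eq: "sample_dist n \<nu> S u (gam m H \<omega>) = density Bn (\<lambda>x. ennreal (Pd \<omega> x))"
proof -
  have "sample_dist n \<nu> S u (gam m H \<omega>) = density Bn (\<lambda>x. \<Prod>i\<in>{..<n}. ennreal (fd \<omega> (x i)))"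
    unfolding sample_dist_def obs_eq
    by (rule PiM_density[OF B_sf _ fd_prob]) auto
  also have "\<dots> = density Bn (\<lambda>x. ennreal (Pd \<omega> x))"
    unfolding Pd_def by (subst prod_ennreal) (auto intro: fd_nonneg)
  finally show ?thesis .
qed

lemma Pd_int: "(\<integral>\<^sup>+ x. ennreal (Pd \<omega> x) \<partial>Bn) = 1"
proof -
  have "(\<integral>\<^sup>+ x. ennreal (Pd \<omega> x) \<partial>Bn) = (\<integral>\<^sup>+ x. (\<Prod>i\<in>{..<n}. ennreal (fd \<omega> (x i))) \<partial>Bn)"
    unfolding Pd_def by (subst prod_ennreal) (auto intro: fd_nonneg)
  also have "\<dots> = (\<Prod>i\<in>{..<n}. \<integral>\<^sup>+ z. ennreal (fd \<omega> z) \<partial>B)"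
    by (rule PB.product_nn_integral_prod) auto
  also have "\<dots> = 1" by (simp add: fd_int)
  finally show ?thesis .
qed

end

lemma sqrt_prod: "finite A \<Longrightarrow> sqrt (prod f A) = (\<Prod>i\<in>A. sqrt (f i))"
  by (induction A rule: finite_induct) (auto simp: real_sqrt_mult)

context hyp begin

interpretation N: sigma_finite_measure \<nu> by (rule sf)
interpretation PWp: prob_space PW by (rule PW_prob)
interpretation BB: sigma_finite_measure B by (rule B_sf)
interpretation PB: product_sigma_finite "\<lambda>_. B"
  unfolding product_sigma_finite_def using B_sf by blast

definition C :: "nat \<Rightarrow> real set" where "C j = {w. \<lfloor>real m * w\<rfloor> = int j}"

lemma C_meas[measurable]: "C j \<in> sets borel" unfolding C_def by measurable

lemma C_sub: assumes "j < m" "w \<in> C j" shows "w \<in> {0..1}"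
proof -
  have fl: "\<lfloor>real m * w\<rfloor> = int j" using assms(2) unfolding C_def by simp
  have a: "real j \<le> real m * w" "real m * w < real j + 1" using fl by (simp_all add: floor_eq_iff)
  have b: "real j + 1 \<le> real m" using assms(1) by simp
  have mp: "0 < real m" using m1 by simp
  have "0 \<le> real m * w" using a by simp
  then have "0 \<le> w" using mp by (simp add: zero_le_mult_iff)
  moreover have "w < 1"
  proof -
    have "real m * w < real m * 1" using a b by linarith
    then show ?thesis using mp by (metis mult_less_cancel_left_pos)
  qed
  ultimately show ?thesis by auto
qed

abbreviation "g w \<equiv> 2 * H * fr (real m * w)"

lemma gam_diff: assumes "j \<notin> \<omega>"
  shows "(gam m H \<omega> w - gam m H (insert j \<omega>) w)^2 = indicator (C j) w * (g w)^2"
proof (cases "\<lfloor>real m * w\<rfloor> = int j")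
  case True
  then have "\<lfloor>real m * w\<rfloor> \<notin> int ` \<omega>" using assms by auto
  then show ?thesis using True unfolding gam_def psi_def C_def by (simp add: indicator_def)
next
  case False
  then have "(\<lfloor>real m * w\<rfloor> \<in> int ` insert j \<omega>) = (\<lfloor>real m * w\<rfloor> \<in> int ` \<omega>)" by auto
  then show ?thesis using False unfolding gam_def psi_def C_def by (simp add: indicator_def)
qed

lemma zint: assumes "j < m" "0 \<le> c"
  shows "(\<integral>\<^sup>+ w. ennreal (c * (indicator (C j) w * (g w)^2)) \<partial>PW) = ennreal (c * (H^2 / (3 * real m)))"
proof -
  have "(\<integral>\<^sup>+ w. ennreal (c * (indicator (C j) w * (g w)^2)) \<partial>PW)
      = (\<integral>\<^sup>+ w. ennreal (c * (indicator (C j) w * (g w)^2)) * indicator {0..1} w \<partial>lborel)"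
    by (rule nn_integral_PW) (unfold fr_def, measurable)
  also have "\<dots> = (\<integral>\<^sup>+ w. ennreal c * ennreal (indicator (C j) w * (g w)^2) \<partial>lborel)"
  proof (rule nn_integral_cong)
    fix w
    have "ennreal (c * (indicator (C j) w * (g w)^2)) * indicator {0..1} w = ennreal (c * (indicator (C j) w * (g w)^2))"
      using C_sub[OF assms(1), of w] by (auto simp: indicator_def)
    also have "\<dots> = ennreal c * ennreal (indicator (C j) w * (g w)^2)"
      using assms(2) by (intro ennreal_mult) auto
    finally show "ennreal (c * (indicator (C j) w * (g w)^2)) * indicator {0..1} w = ennreal c * ennreal (indicator (C j) w * (g w)^2)" .
  qed
  also have "\<dots> = ennreal c * (\<integral>\<^sup>+ w. ennreal (indicator (C j) w * (g w)^2) \<partial>lborel)"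
    by (rule nn_integral_cmult) (unfold fr_def, measurable)
  also have "(\<integral>\<^sup>+ w. ennreal (indicator (C j) w * (g w)^2) \<partial>lborel) = ennreal (H^2 / (3 * real m))"
    unfolding C_def by (rule tent_integral) (use m1 in simp)
  also have "ennreal c * ennreal (H^2 / (3 * real m)) = ennreal (c * (H^2 / (3 * real m)))"
    using assms(2) by (intro ennreal_mult[symmetric]) auto
  finally show ?thesis .
qed

lemma ennreal_one_minus_plus: "0 \<le> t \<Longrightarrow> 1 \<le> ennreal (1 - t) + ennreal t"
proof (cases "t \<le> 1")
  case True
  assume "0 \<le> t"
  then have "ennreal (1 - t) + ennreal t = ennreal (1 - t + t)" using True by (intro ennreal_plus[symmetric]) auto
  then show ?thesis by simp
next
  case False
  then have "1 \<le> ennreal t" by (simp add: ennreal_1[symmetric] del: ennreal_1)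
  then show ?thesis by (simp add: add_increasing)
qed

lemma ennreal_sub_bound: assumes "1 \<le> X + ennreal c" "0 \<le> c" shows "ennreal (1 - c) \<le> X"
proof (cases X)
  case (real x)
  then have "ennreal 1 \<le> ennreal (x + c)" using assms by (simp add: ennreal_plus)
  then have "1 \<le> x + c" using assms real by (subst (asm) ennreal_le_iff) auto
  then have "1 - c \<le> x" by simp
  then show ?thesis using real by (simp add: ennreal_leI)
next
  case top then show ?thesis by simp
qed

lemma rho1: assumes j: "j < m" "j \<notin> \<omega>"
  shows "ennreal (1 - \<kappa>^2 * (H^2 / (3 * real m))) \<le> (\<integral>\<^sup>+ z. ennreal (sqrt (fd \<omega> z * fd (insert j \<omega>) z)) \<partial>B)"
proof -
  define z where "z w = indicator (C j) w * (g w)^2" for w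
  have zm[measurable]: "z \<in> borel_measurable borel" unfolding z_def fr_def by measurable
  have z0: "0 \<le> z w" for w unfolding z_def by simp
  have eq: "(\<integral>\<^sup>+ z. ennreal (sqrt (fd \<omega> z * fd (insert j \<omega>) z)) \<partial>B)
     = (\<integral>\<^sup>+ w. \<integral>\<^sup>+ y. ennreal (sqrt (fd \<omega> (w, y) * fd (insert j \<omega>) (w, y))) \<partial>\<nu> \<partial>PW)"
    by (rule N.nn_integral_fst[symmetric]) measurable
  have inner: "ennreal (1 - \<kappa>^2 * z w) \<le> (\<integral>\<^sup>+ y. ennreal (sqrt (fd \<omega> (w, y) * fd (insert j \<omega>) (w, y))) \<partial>\<nu>)" for w
  proof -
    let ?s = "gam m H \<omega> w" and ?t = "gam m H (insert j \<omega>) w"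
    have "(\<integral>\<^sup>+ y. ennreal (sqrt (fd \<omega> (w, y) * fd (insert j \<omega>) (w, y))) \<partial>\<nu>)
        = (\<integral>\<^sup>+ y. ennreal (sqrt (pp (uu ?s) y * pp (uu ?t) y)) \<partial>\<nu>)"
      by (simp add: fd_def)
    also have "\<dots> = ennreal (\<integral>y. sqrt (pp (uu ?s) y * pp (uu ?t) y) \<partial>\<nu>)"
      by (rule nn_integral_eq_integral[OF sqrt_prod_integrable[OF uu_I uu_I]])
         (auto intro!: AE_I2 mult_nonneg_nonneg less_imp_le[OF expdens_pos])
    also have "\<dots> = ennreal (1 - hh ?s ?t)" by (simp add: hh_aff)
    finally have e: "(\<integral>\<^sup>+ y. ennreal (sqrt (fd \<omega> (w, y) * fd (insert j \<omega>) (w, y))) \<partial>\<nu>) = ennreal (1 - hh ?s ?t)" .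
    have sJ: "?s \<in> J" "?t \<in> J" using gam_J[OF H0 Hab] by auto
    have "hR \<nu> S u ?s ?t \<le> \<kappa> * \<bar>?s - ?t\<bar>" using lip sJ by auto
    moreover have "0 \<le> hR \<nu> S u ?s ?t" unfolding hR_def hellinger_def by simp
    ultimately have "(hR \<nu> S u ?s ?t)^2 \<le> (\<kappa> * \<bar>?s - ?t\<bar>)^2" by (intro power_mono) auto
    also have "\<dots> = \<kappa>^2 * z w" unfolding z_def using gam_diff[OF j(2)] by (simp add: power_mult_distrib)
    finally have "hh ?s ?t \<le> \<kappa>^2 * z w" using hh_eq[OF sJ] by simp
    then show ?thesis unfolding e by (intro ennreal_leI) auto
  qed
  have A: "(\<integral>\<^sup>+ w. ennreal (1 - \<kappa>^2 * z w) \<partial>PW) \<le> (\<integral>\<^sup>+ z. ennreal (sqrt (fd \<omega> z * fd (insert j \<omega>) z)) \<partial>B)"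
    unfolding eq by (rule nn_integral_mono) (rule inner)
  have "1 = (\<integral>\<^sup>+ w. 1 \<partial>PW)" using PWp.emeasure_space_1 by simp
  also have "\<dots> \<le> (\<integral>\<^sup>+ w. ennreal (1 - \<kappa>^2 * z w) + ennreal (\<kappa>^2 * z w) \<partial>PW)"
    by (rule nn_integral_mono) (rule ennreal_one_minus_plus, simp add: z0)
  also have "\<dots> = (\<integral>\<^sup>+ w. ennreal (1 - \<kappa>^2 * z w) \<partial>PW) + (\<integral>\<^sup>+ w. ennreal (\<kappa>^2 * z w) \<partial>PW)"
    by (rule nn_integral_add) measurable
  also have "(\<integral>\<^sup>+ w. ennreal (\<kappa>^2 * z w) \<partial>PW) = ennreal (\<kappa>^2 * (H^2 / (3 * real m)))"
    unfolding z_def by (rule zint[OF j(1)]) simp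
  finally have "ennreal (1 - \<kappa>^2 * (H^2 / (3 * real m))) \<le> (\<integral>\<^sup>+ w. ennreal (1 - \<kappa>^2 * z w) \<partial>PW)"
    by (rule ennreal_sub_bound) simp
  then show ?thesis using A by (rule order_trans)
qed

lemma rho_n: "(\<integral>\<^sup>+ x. ennreal (sqrt (Pd \<omega> x * Pd \<omega>' x)) \<partial>Bn)
    = (\<integral>\<^sup>+ z. ennreal (sqrt (fd \<omega> z * fd \<omega>' z)) \<partial>B) ^ n"
proof -
  have "(\<integral>\<^sup>+ x. ennreal (sqrt (Pd \<omega> x * Pd \<omega>' x)) \<partial>Bn)
      = (\<integral>\<^sup>+ x. (\<Prod>i\<in>{..<n}. ennreal (sqrt (fd \<omega> (x i) * fd \<omega>' (x i)))) \<partial>Bn)"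
  proof (rule nn_integral_cong)
    fix x
    have "sqrt (Pd \<omega> x * Pd \<omega>' x) = (\<Prod>i\<in>{..<n}. sqrt (fd \<omega> (x i) * fd \<omega>' (x i)))"
      unfolding Pd_def prod.distrib[symmetric] by (rule sqrt_prod) simp
    then show "ennreal (sqrt (Pd \<omega> x * Pd \<omega>' x)) = (\<Prod>i\<in>{..<n}. ennreal (sqrt (fd \<omega> (x i) * fd \<omega>' (x i))))"
      by (subst prod_ennreal) (auto intro!: mult_nonneg_nonneg fd_nonneg)
  qed
  also have "\<dots> = (\<Prod>i\<in>{..<n}. \<integral>\<^sup>+ z. ennreal (sqrt (fd \<omega> z * fd \<omega>' z)) \<partial>B)"
    by (rule PB.product_nn_integral_prod) auto
  also have "\<dots> = (\<integral>\<^sup>+ z. ennreal (sqrt (fd \<omega> z * fd \<omega>' z)) \<partial>B) ^ n" by simp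
  finally show ?thesis .
qed

lemma min_bound: assumes j: "j < m" "j \<notin> \<omega>"
  and c1: "\<kappa>^2 * (H^2 / (3 * real m)) \<le> 1" and nc1: "real n * (\<kappa>^2 * (H^2 / (3 * real m))) \<le> 1"
  shows "ennreal ((1 - real n * (\<kappa>^2 * (H^2 / (3 * real m))))^2 / 2)
    \<le> (\<integral>\<^sup>+ x. ennreal (min (Pd \<omega> x) (Pd (insert j \<omega>) x)) \<partial>Bn)"
proof -
  define c0 where "c0 = \<kappa>^2 * (H^2 / (3 * real m))"
  have c00: "0 \<le> c0" unfolding c0_def using m1 H0 by simp
  define \<rho> where "\<rho> = (\<integral>\<^sup>+ x. ennreal (sqrt (Pd \<omega> x * Pd (insert j \<omega>) x)) \<partial>Bn)"
  have "ennreal (1 - c0) ^ n \<le> \<rho>"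
    unfolding \<rho>_def rho_n c0_def by (intro power_mono rho1[OF j]) simp
  moreover have "ennreal (1 - c0) ^ n = ennreal ((1 - c0) ^ n)"
    using c1 unfolding c0_def by (simp add: ennreal_power)
  moreover have "1 + real n * (- c0) \<le> (1 + (- c0)) ^ n"
    by (rule Bernoulli_inequality) (use c1 c0_def in simp)
  ultimately have "ennreal (1 - real n * c0) \<le> \<rho>"
  proof -
    assume a1: "ennreal (1 - c0) ^ n \<le> \<rho>" and a2: "ennreal (1 - c0) ^ n = ennreal ((1 - c0) ^ n)"
      and a3: "1 + real n * - c0 \<le> (1 + - c0) ^ n"
    have "ennreal (1 - real n * c0) \<le> ennreal ((1 - c0) ^ n)" using a3 by (intro ennreal_leI) simp
    then show ?thesis using a1 a2 by simp
  qed
  then have "ennreal (1 - real n * c0) ^ 2 \<le> \<rho> ^ 2" by (rule power_mono) simp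
  moreover have "ennreal (1 - real n * c0) ^ 2 = ennreal ((1 - real n * c0)^2)"
    using nc1 unfolding c0_def by (simp add: ennreal_power)
  moreover have "\<rho> ^ 2 \<le> 2 * (\<integral>\<^sup>+ x. ennreal (min (Pd \<omega> x) (Pd (insert j \<omega>) x)) \<partial>Bn)"
    unfolding \<rho>_def by (rule affinity_min) (auto simp: Pd_int Pd_nonneg)
  ultimately have "2 * ennreal ((1 - real n * c0)^2 / 2) \<le> 2 * (\<integral>\<^sup>+ x. ennreal (min (Pd \<omega> x) (Pd (insert j \<omega>) x)) \<partial>Bn)"
  proof -
    have "ennreal 2 * ennreal ((1 - real n * c0)^2 / 2) = ennreal (2 * ((1 - real n * c0)^2 / 2))"
      by (rule ennreal_mult[symmetric]) auto
    then have "2 * ennreal ((1 - real n * c0)^2 / 2) = ennreal ((1 - real n * c0)^2)" by simp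
    moreover assume "ennreal (1 - real n * c0) ^ 2 \<le> \<rho> ^ 2"
      "ennreal (1 - real n * c0) ^ 2 = ennreal ((1 - real n * c0)^2)"
      "\<rho> ^ 2 \<le> 2 * (\<integral>\<^sup>+ x. ennreal (min (Pd \<omega> x) (Pd (insert j \<omega>) x)) \<partial>Bn)"
    ultimately show ?thesis by simp
  qed
  then show ?thesis unfolding c0_def by (subst (asm) ennreal_mult_le_mult_iff) auto
qed

end

locale est = hyp +
  fixes gt :: "(nat \<Rightarrow> real \<times> 'a) \<Rightarrow> real \<Rightarrow> real"
  assumes gt_est: "gt \<in> estimators n \<nu> J"
begin

interpretation N: sigma_finite_measure \<nu> by (rule sf)
interpretation PWp: prob_space PW by (rule PW_prob)
interpretation BB: sigma_finite_measure B by (rule B_sf)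
interpretation PB: product_sigma_finite "\<lambda>_. B"
  unfolding product_sigma_finite_def using B_sf by blast

lemma sets_B: "sets B = sets (borel \<Otimes>\<^sub>M \<nu>)"
  by (rule sets_pair_measure_cong) auto

lemma sets_Bn: "sets Bn = sets (PiM {..<n} (\<lambda>_. borel \<Otimes>\<^sub>M \<nu>))"
  by (rule sets_PiM_cong) (auto simp: sets_B)

lemma space_Bn: "space Bn = space (PiM {..<n} (\<lambda>_. borel \<Otimes>\<^sub>M \<nu>))"
  by (rule sets_eq_imp_space_eq[OF sets_Bn])

lemma gt_meas: "(\<lambda>(x, w). gt x w) \<in> borel_measurable (Bn \<Otimes>\<^sub>M PW)"
proof -
  have "sets (Bn \<Otimes>\<^sub>M PW) = sets (PiM {..<n} (\<lambda>_. borel \<Otimes>\<^sub>M \<nu>) \<Otimes>\<^sub>M borel)"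
    by (rule sets_pair_measure_cong[OF sets_Bn]) simp
  then show ?thesis using gt_est unfolding estimators_def
    by (subst measurable_cong_sets[of _ "PiM {..<n} (\<lambda>_. borel \<Otimes>\<^sub>M \<nu>) \<Otimes>\<^sub>M borel" borel borel]) auto
qed

lemma gt_J: "x \<in> space Bn \<Longrightarrow> w \<in> {0..1} \<Longrightarrow> gt x w \<in> J"
  using gt_est unfolding estimators_def space_Bn by auto

definition tt where "tt x w = (if gt x w \<in> J then gt x w else a)"

lemma tt_meas[measurable]: "(\<lambda>(x, w). tt x w) \<in> borel_measurable (Bn \<Otimes>\<^sub>M PW)"
proof -
  have [measurable]: "J \<in> sets borel" by (rule real_interval_borel_measurable[OF Jint])
  have [measurable]: "(\<lambda>p. gt (fst p) (snd p)) \<in> borel_measurable (Bn \<Otimes>\<^sub>M PW)"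
    using gt_meas by (simp add: case_prod_beta')
  show ?thesis unfolding tt_def case_prod_beta' by measurable
qed

lemma tt_J: "tt x w \<in> J" unfolding tt_def using aJ by auto

definition T where
  "T j bb x = (\<integral>\<^sup>+ w. ennreal (indicator (C j) w * hh (a + (if bb then g w else 0)) (tt x w)) \<partial>PW)"

lemma T_meas[measurable]: "T j bb \<in> borel_measurable Bn"
proof -
  interpret PWs: sigma_finite_measure PW by (rule PW_sf)
  have [measurable]: "(\<lambda>p. tt (fst p) (snd p)) \<in> borel_measurable (Bn \<Otimes>\<^sub>M PW)"
    using tt_meas by (simp add: case_prod_beta')
  have [measurable]: "(\<lambda>p. hh (fst p) (snd p)) \<in> borel_measurable (borel \<Otimes>\<^sub>M borel)"
    using hh_meas by (simp add: case_prod_beta')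
  have "(\<lambda>(x, w). ennreal (indicator (C j) w * hh (a + (if bb then g w else 0)) (tt x w))) \<in> borel_measurable (Bn \<Otimes>\<^sub>M PW)"
    unfolding case_prod_beta' fr_def
    by (intro measurable_compose[OF _ measurable_ennreal] borel_measurable_times
          measurable_compose[OF _ hh_meas[unfolded case_prod_beta']] measurable_Pair) measurable
  then show ?thesis unfolding T_def[abs_def]
    by (rule sigma_finite_measure.borel_measurable_nn_integral[OF PW_sf])
qed

lemma sum_single:
  assumes x: "x \<in> space Bn"
  shows "(\<Sum>j<m. ennreal (indicator (C j) w * hh (a + (if j \<in> \<omega> then g w else 0)) (tt x w)))
      \<le> ennreal ((hR \<nu> S u (gam m H \<omega> w) (gt x w))^2)"
proof (cases "\<exists>j0<m. w \<in> C j0")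
  case True
  then obtain j0 where j0: "j0 < m" "w \<in> C j0" by auto
  have fl: "\<lfloor>real m * w\<rfloor> = int j0" using j0 unfolding C_def by auto
  have other: "ennreal (indicator (C j) w * hh (a + (if j \<in> \<omega> then g w else 0)) (tt x w)) = 0"
    if "j \<in> {..<m} - {j0}" for j
  proof -
    have "w \<notin> C j" using that fl unfolding C_def by auto
    then show ?thesis by simp
  qed
  have "(\<Sum>j<m. ennreal (indicator (C j) w * hh (a + (if j \<in> \<omega> then g w else 0)) (tt x w)))
      = ennreal (indicator (C j0) w * hh (a + (if j0 \<in> \<omega> then g w else 0)) (tt x w))
        + (\<Sum>j\<in>{..<m} - {j0}. ennreal (indicator (C j) w * hh (a + (if j \<in> \<omega> then g w else 0)) (tt x w)))"
    using j0 by (intro sum.remove) auto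
  also have "(\<Sum>j\<in>{..<m} - {j0}. ennreal (indicator (C j) w * hh (a + (if j \<in> \<omega> then g w else 0)) (tt x w))) = 0"
    by (rule sum.neutral) (use other in blast)
  finally have sm: "(\<Sum>j<m. ennreal (indicator (C j) w * hh (a + (if j \<in> \<omega> then g w else 0)) (tt x w)))
     = ennreal (indicator (C j0) w * hh (a + (if j0 \<in> \<omega> then g w else 0)) (tt x w))" by simp
  have e1: "a + (if j0 \<in> \<omega> then g w else 0) = gam m H \<omega> w"
    unfolding gam_def psi_def fl by auto
  have e2: "tt x w = gt x w" unfolding tt_def using gt_J[OF x C_sub[OF j0]] by simp
  have e3: "hh (gam m H \<omega> w) (gt x w) = (hR \<nu> S u (gam m H \<omega> w) (gt x w))^2"
    by (rule hh_eq[OF gam_J[OF H0 Hab] gt_J[OF x C_sub[OF j0]]])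
  show ?thesis by (subst sm) (simp add: e1 e2 e3 j0)
next
  case False
  then have "\<And>j. j \<in> {..<m} \<Longrightarrow> ennreal (indicator (C j) w * hh (a + (if j \<in> \<omega> then g w else 0)) (tt x w)) = 0"
    by auto
  then have "(\<Sum>j<m. ennreal (indicator (C j) w * hh (a + (if j \<in> \<omega> then g w else 0)) (tt x w))) = 0"
    by (rule sum.neutral[OF ballI])
  then show ?thesis by simp
qed

lemma integrand_meas: assumes "x \<in> space Bn"
  shows "(\<lambda>w. ennreal (indicator (C j) w * hh (a + (if bb then g w else 0)) (tt x w))) \<in> borel_measurable PW"
proof -
  have [measurable]: "(\<lambda>p. tt (fst p) (snd p)) \<in> borel_measurable (Bn \<Otimes>\<^sub>M PW)"
    using tt_meas by (simp add: case_prod_beta')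
  have "(\<lambda>(x, w). ennreal (indicator (C j) w * hh (a + (if bb then g w else 0)) (tt x w))) \<in> borel_measurable (Bn \<Otimes>\<^sub>M PW)"
    unfolding case_prod_beta' fr_def
    by (intro measurable_compose[OF _ measurable_ennreal] borel_measurable_times
          measurable_compose[OF _ hh_meas[unfolded case_prod_beta']] measurable_Pair) measurable
  from measurable_Pair2[OF this assms] show ?thesis by simp
qed

lemma risk_lower: "(\<Sum>j<m. \<integral>\<^sup>+ x. ennreal (Pd \<omega> x) * T j (j \<in> \<omega>) x \<partial>Bn) \<le> risk n \<nu> S u (gam m H \<omega>) gt"
proof -
  have pw: "(\<Sum>j<m. T j (j \<in> \<omega>) x) \<le> (\<integral>\<^sup>+ w. ennreal ((hR \<nu> S u (gam m H \<omega> w) (gt x w))^2) \<partial>PW)"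
    if x: "x \<in> space Bn" for x
  proof -
    have "(\<Sum>j<m. T j (j \<in> \<omega>) x) = (\<integral>\<^sup>+ w. (\<Sum>j<m. ennreal (indicator (C j) w * hh (a + (if j \<in> \<omega> then g w else 0)) (tt x w))) \<partial>PW)"
      unfolding T_def by (rule nn_integral_sum[symmetric]) (rule integrand_meas[OF x])
    also have "\<dots> \<le> (\<integral>\<^sup>+ w. ennreal ((hR \<nu> S u (gam m H \<omega> w) (gt x w))^2) \<partial>PW)"
      by (rule nn_integral_mono) (rule sum_single[OF x])
    finally show ?thesis .
  qed
  have "(\<Sum>j<m. \<integral>\<^sup>+ x. ennreal (Pd \<omega> x) * T j (j \<in> \<omega>) x \<partial>Bn)
      = (\<integral>\<^sup>+ x. (\<Sum>j<m. ennreal (Pd \<omega> x) * T j (j \<in> \<omega>) x) \<partial>Bn)"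
    by (rule nn_integral_sum[symmetric]) measurable
  also have "\<dots> = (\<integral>\<^sup>+ x. ennreal (Pd \<omega> x) * (\<Sum>j<m. T j (j \<in> \<omega>) x) \<partial>Bn)"
    by (simp add: sum_distrib_left)
  also have "\<dots> = (\<integral>\<^sup>+ x. (\<Sum>j<m. T j (j \<in> \<omega>) x) \<partial>density Bn (\<lambda>x. ennreal (Pd \<omega> x)))"
    by (rule nn_integral_density[symmetric]) measurable
  also have "\<dots> \<le> (\<integral>\<^sup>+ x. (\<integral>\<^sup>+ w. ennreal ((hR \<nu> S u (gam m H \<omega> w) (gt x w))^2) \<partial>PW) \<partial>density Bn (\<lambda>x. ennreal (Pd \<omega> x)))"
    by (rule nn_integral_mono) (rule pw, simp)
  also have "\<dots> = risk n \<nu> S u (gam m H \<omega>) gt"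
    unfolding risk_def sample_eq ..
  finally show ?thesis .
qed

lemma g_bounds: "0 \<le> g w" "g w \<le> H"
proof -
  have "H * (2 * fr (real m * w)) \<le> H * 1" using fr_le[of "real m * w"] H0 by (intro mult_left_mono) auto
  then show "g w \<le> H" by simp
  show "0 \<le> g w" using H0 fr_nonneg by simp
qed

lemma TT: assumes j: "j < m" and x: "x \<in> space Bn"
  shows "ennreal (cK^2 / 2 * (H^2 / (3 * real m))) \<le> T j False x + T j True x"
proof -
  let ?e = "\<lambda>bb w. ennreal (indicator (C j) w * hh (a + (if bb then g w else 0)) (tt x w))"
  have "ennreal (cK^2 / 2 * (H^2 / (3 * real m))) = (\<integral>\<^sup>+ w. ennreal (cK^2 / 2 * (indicator (C j) w * (g w)^2)) \<partial>PW)"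
    by (rule zint[OF j, symmetric]) simp
  also have "\<dots> \<le> (\<integral>\<^sup>+ w. ?e False w + ?e True w \<partial>PW)"
  proof (rule nn_integral_mono)
    fix w
    let ?t = "tt x w"
    have aK: "a \<in> {a..b}" "a + g w \<in> {a..b}" using g_bounds[of w] Hab ab by auto
    have "cK * \<bar>a - (a + g w)\<bar> \<le> hR \<nu> S u a (a + g w)" using low aK by blast
    moreover have "0 \<le> cK * \<bar>a - (a + g w)\<bar>" using cKpos by simp
    ultimately have "(cK * \<bar>a - (a + g w)\<bar>)^2 \<le> (hR \<nu> S u a (a + g w))^2" by (intro power_mono) auto
    moreover have "hh a (a + g w) = (hR \<nu> S u a (a + g w))^2"
      using hh_eq[of a "a + g w"] aK KJ by blast
    ultimately have "cK^2 * (g w)^2 \<le> hh a (a + g w)"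
      by (simp add: power_mult_distrib)
    also have "\<dots> \<le> 2 * (hh a ?t + hh (a + g w) ?t)" using hh_tri[of a "a + g w" ?t] by simp
    finally have r: "cK^2 / 2 * (g w)^2 \<le> hh a ?t + hh (a + g w) ?t" by simp
    have "cK^2 / 2 * (indicator (C j) w * (g w)^2) \<le> indicator (C j) w * hh a ?t + indicator (C j) w * hh (a + g w) ?t"
      using r by (auto simp: indicator_def)
    then have "ennreal (cK^2 / 2 * (indicator (C j) w * (g w)^2)) \<le> ennreal (indicator (C j) w * hh a ?t + indicator (C j) w * hh (a + g w) ?t)"
      by (rule ennreal_leI)
    also have "\<dots> = ?e False w + ?e True w" using hh_nonneg by (simp add: ennreal_plus)
    finally show "ennreal (cK^2 / 2 * (indicator (C j) w * (g w)^2)) \<le> ?e False w + ?e True w" .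
  qed
  also have "\<dots> = T j False x + T j True x"
    unfolding T_def by (rule nn_integral_add) (rule integrand_meas[OF x])+
  finally show ?thesis .
qed

lemma pair_bound: assumes j: "j < m" "j \<notin> \<omega>"
  and c1: "\<kappa>^2 * (H^2 / (3 * real m)) \<le> 1" and nc1: "real n * (\<kappa>^2 * (H^2 / (3 * real m))) \<le> 1"
  shows "ennreal (cK^2 / 2 * (H^2 / (3 * real m))) * ennreal ((1 - real n * (\<kappa>^2 * (H^2 / (3 * real m))))^2 / 2)
    \<le> (\<integral>\<^sup>+ x. ennreal (Pd \<omega> x) * T j False x \<partial>Bn) + (\<integral>\<^sup>+ x. ennreal (Pd (insert j \<omega>) x) * T j True x \<partial>Bn)"
proof -
  let ?D = "ennreal (cK^2 / 2 * (H^2 / (3 * real m)))"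
  let ?mn = "\<lambda>x. ennreal (min (Pd \<omega> x) (Pd (insert j \<omega>) x))"
  have "?D * ennreal ((1 - real n * (\<kappa>^2 * (H^2 / (3 * real m))))^2 / 2) \<le> ?D * (\<integral>\<^sup>+ x. ?mn x \<partial>Bn)"
    by (intro mult_left_mono min_bound[OF j c1 nc1]) simp
  also have "\<dots> = (\<integral>\<^sup>+ x. ?D * ?mn x \<partial>Bn)"
    by (rule nn_integral_cmult[symmetric]) measurable
  also have "\<dots> \<le> (\<integral>\<^sup>+ x. ennreal (Pd \<omega> x) * T j False x + ennreal (Pd (insert j \<omega>) x) * T j True x \<partial>Bn)"
  proof (rule nn_integral_mono)
    fix x assume x: "x \<in> space Bn"
    have "?D * ?mn x \<le> (T j False x + T j True x) * ?mn x"
      by (intro mult_right_mono TT[OF j(1) x]) simp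
    also have "\<dots> = T j False x * ?mn x + T j True x * ?mn x" by (simp add: distrib_right)
    also have "\<dots> \<le> T j False x * ennreal (Pd \<omega> x) + T j True x * ennreal (Pd (insert j \<omega>) x)"
      by (intro add_mono mult_left_mono ennreal_leI) auto
    finally show "?D * ?mn x \<le> ennreal (Pd \<omega> x) * T j False x + ennreal (Pd (insert j \<omega>) x) * T j True x"
      by (simp add: mult.commute)
  qed
  also have "\<dots> = (\<integral>\<^sup>+ x. ennreal (Pd \<omega> x) * T j False x \<partial>Bn) + (\<integral>\<^sup>+ x. ennreal (Pd (insert j \<omega>) x) * T j True x \<partial>Bn)"
    by (rule nn_integral_add) measurable
  finally show ?thesis .
qed

end

lemma pow_split:
  assumes "j \<in> A" "finite A"
  shows "(\<Sum>X\<in>Pow A. F X) = (\<Sum>X\<in>Pow (A - {j}). F X + F (insert j X))"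
proof -
  have A: "A = insert j (A - {j})" using assms by auto
  have "(\<Sum>X\<in>Pow A. F X) = (\<Sum>X\<in>Pow (A - {j}) \<union> insert j ` Pow (A - {j}). F X)"
    by (subst A) (simp only: Pow_insert)
  also have "\<dots> = (\<Sum>X\<in>Pow (A - {j}). F X) + (\<Sum>X\<in>insert j ` Pow (A - {j}). F X)"
    by (rule sum.union_disjoint) (use assms in auto)
  also have "(\<Sum>X\<in>insert j ` Pow (A - {j}). F X) = (\<Sum>X\<in>Pow (A - {j}). F (insert j X))"
  proof (rule sum.reindex_cong[of "insert j"])
    show "inj_on (insert j) (Pow (A - {j}))"
    proof (rule inj_onI)
      fix X Y assume "X \<in> Pow (A - {j})" "Y \<in> Pow (A - {j})" "insert j X = insert j Y"
      then have "j \<notin> X" "j \<notin> Y" by auto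
      then show "X = Y" using \<open>insert j X = insert j Y\<close> by (metis insert_ident)
    qed
  qed auto
  finally show ?thesis by (simp add: sum.distrib)
qed

context est begin

lemma main_bound:
  assumes c1: "\<kappa>^2 * (H^2 / (3 * real m)) \<le> 1" and nc1: "real n * (\<kappa>^2 * (H^2 / (3 * real m))) \<le> 1"
    and hol: "H * (2 * real m) powr \<alpha> \<le> M" "0 < \<alpha>" "\<alpha> \<le> 1"
  shows "ennreal (cK^2 * H^2 * (1 - real n * (\<kappa>^2 * (H^2 / (3 * real m))))^2 / 24)
    \<le> (SUP gs\<in>holder_class \<alpha> M J. risk n \<nu> S u gs gt)"
proof -
  define x where "x = real n * (\<kappa>^2 * (H^2 / (3 * real m)))"
  define W where "W = ennreal (cK^2 / 2 * (H^2 / (3 * real m))) * ennreal ((1 - x)^2 / 2)"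
  define SV where "SV = (SUP gs\<in>holder_class \<alpha> M J. risk n \<nu> S u gs gt)"
  define E where "E j \<omega> = (\<integral>\<^sup>+ x. ennreal (Pd \<omega> x) * T j (j \<in> \<omega>) x \<partial>Bn)" for j \<omega>
  have mp: "0 < m" using m1 by simp
  have up: "risk n \<nu> S u (gam m H \<omega>) gt \<le> SV" for \<omega>
    unfolding SV_def by (rule SUP_upper) (rule gam_holder[OF H0 Hab mp hol(2,3,1)])
  have "(\<Sum>\<omega>\<in>Pow {..<m}. risk n \<nu> S u (gam m H \<omega>) gt) \<le> (\<Sum>\<omega>\<in>Pow {..<m}. SV)"
    by (rule sum_mono) (rule up)
  also have "\<dots> = of_nat (2^m) * SV" by (simp add: card_Pow)
  finally have upper: "(\<Sum>\<omega>\<in>Pow {..<m}. risk n \<nu> S u (gam m H \<omega>) gt) \<le> of_nat (2^m) * SV" .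
  have inner: "of_nat (2^(m-1)) * W \<le> (\<Sum>\<omega>\<in>Pow {..<m}. E j \<omega>)" if j: "j < m" for j
  proof -
    have "(\<Sum>\<omega>\<in>Pow {..<m}. E j \<omega>) = (\<Sum>\<omega>\<in>Pow ({..<m} - {j}). E j \<omega> + E j (insert j \<omega>))"
      by (rule pow_split) (use j in auto)
    also have "\<dots> \<ge> (\<Sum>\<omega>\<in>Pow ({..<m} - {j}). W)"
    proof (rule sum_mono)
      fix \<omega> assume "\<omega> \<in> Pow ({..<m} - {j})"
      then have jn: "j \<notin> \<omega>" by auto
      show "W \<le> E j \<omega> + E j (insert j \<omega>)"
        unfolding W_def E_def x_def using pair_bound[OF j jn c1 nc1] jn by simp
    qed
    also have "(\<Sum>\<omega>\<in>Pow ({..<m} - {j}). W) = of_nat (2^(m-1)) * W"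
      using j by (simp add: card_Pow)
    finally show ?thesis .
  qed
  have "of_nat m * (of_nat (2^(m-1)) * W) = (\<Sum>j<m. of_nat (2^(m-1)) * W)" by simp
  also have "\<dots> \<le> (\<Sum>j<m. \<Sum>\<omega>\<in>Pow {..<m}. E j \<omega>)" by (rule sum_mono) (rule inner, simp)
  also have "\<dots> = (\<Sum>\<omega>\<in>Pow {..<m}. \<Sum>j<m. E j \<omega>)" by (rule sum.swap)
  also have "\<dots> \<le> (\<Sum>\<omega>\<in>Pow {..<m}. risk n \<nu> S u (gam m H \<omega>) gt)"
    by (rule sum_mono) (unfold E_def, rule risk_lower)
  also have "\<dots> \<le> of_nat (2^m) * SV" by (rule upper)
  finally have ineq: "of_nat m * (of_nat (2^(m-1)) * W) \<le> of_nat (2^m) * SV" .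
  define V where "V = cK^2 * H^2 * (1 - x)^2 / 24"
  have V0: "0 \<le> V" unfolding V_def by simp
  have onat: "of_nat k * ennreal r = ennreal (real k * r)" if "0 \<le> r" for k r
    using that by (simp add: ennreal_of_nat_eq_real_of_nat ennreal_mult)
  have W': "W = ennreal (cK^2 / 2 * (H^2 / (3 * real m)) * ((1 - x)^2 / 2))"
    unfolding W_def using H0 by (intro ennreal_mult[symmetric]) auto
  have "of_nat m * (of_nat (2^(m-1)) * W) = ennreal (real m * (real (2^(m-1)) * (cK^2 / 2 * (H^2 / (3 * real m)) * ((1 - x)^2 / 2))))"
  proof -
    define Z where "Z = cK^2 / 2 * (H^2 / (3 * real m)) * ((1 - x)^2 / 2)"
    have Z0: "0 \<le> Z" unfolding Z_def using mp by simp
    have s1: "of_nat (2^(m-1)) * ennreal Z = ennreal (real (2^(m-1)) * Z)" by (rule onat[OF Z0])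
    have s2: "of_nat m * ennreal (real (2^(m-1)) * Z) = ennreal (real m * (real (2^(m-1)) * Z))"
      by (rule onat) (use Z0 in simp)
    show ?thesis unfolding W' Z_def[symmetric] s1 s2 ..
  qed
  also have "real m * (real (2^(m-1)) * (cK^2 / 2 * (H^2 / (3 * real m)) * ((1 - x)^2 / 2))) = real (2^m) * V"
  proof -
    have en: "(2::nat)^m = 2 * 2^(m-1)" using mp by (cases m) auto
    have e: "real (2^m) = 2 * real (2^(m-1))" unfolding en of_nat_mult by simp
    have "real m * (q * (cK^2 / 2 * (H^2 / (3 * real m)) * ((1 - x)^2 / 2))) = (2 * q) * (cK^2 * H^2 * (1 - x)^2 / 24)" for q
      using mp by (simp add: field_simps)
    then show ?thesis unfolding V_def e by blast
  qed
  also have "ennreal (real (2^m) * V) = of_nat (2^m) * ennreal V"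
    using V0 by (rule onat[symmetric])
  finally have "of_nat (2^m) * ennreal V \<le> of_nat (2^m) * SV" using ineq by simp
  then have "ennreal V \<le> SV" by (subst (asm) ennreal_mult_le_mult_iff) (auto simp: power_eq_top_ennreal)
  then show ?thesis unfolding V_def x_def SV_def .
qed

end

theorem proposition3:
  fixes \<nu> :: "'y measure" and S :: "'y \<Rightarrow> real" and I J K :: "real set"
    and u :: "real \<Rightarrow> real" and \<kappa> cK L \<alpha> M :: real and n :: nat
  assumes "sigma_finite_measure \<nu>"
    and "S \<in> borel_measurable \<nu>"
    and "\<not> (\<exists>c. AE y in \<nu>. S y = c)"
    and "is_interval I" and "interior I \<noteq> {}"
    and "\<forall>\<theta>\<in>I. integrable \<nu> (\<lambda>y. exp (\<theta> * S y))"
    and "is_interval J" and "interior J \<noteq> {}"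
    and "continuous_on J u"
    and "strict_mono_on J u \<or> strict_mono_on J (\<lambda>x. - u x)"
    and "u ` J = I"
    and "\<kappa> > 0"
    and "\<forall>g\<in>J. \<forall>g'\<in>J. hR \<nu> S u g g' \<le> \<kappa> * \<bar>g - g'\<bar>"
    and "K = {a..b}" and "K \<subseteq> J" and "b - a = 2 * L" and "L > 0"
    and "cK > 0"
    and "\<forall>g\<in>K. \<forall>g'\<in>K. hR \<nu> S u g g' \<ge> cK * \<bar>g - g'\<bar>"
    and "0 < \<alpha>" and "\<alpha> \<le> 1" and "M > 0"
  shows "minimax_risk n \<nu> S u J \<alpha> M \<ge>
    ennreal (cK\<^sup>2 / 48 *
      min ((3 * M powr (1 / \<alpha>) / (2 powr (2 * \<alpha> + 4 + 1 / \<alpha>) * \<kappa>\<^sup>2 * real n))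
             powr (2 * \<alpha> / (1 + 2 * \<alpha>)))
          (min (M\<^sup>2 / 4) (L\<^sup>2)))"
proof -
  note K = assms(14)
  have ab: "a < b" using assms(16,17) by simp
  have KJ: "{a..b} \<subseteq> J" using assms(14,15) by simp
  show ?thesis
  proof (cases "n = 0")
    case True
    have "min ((3 * M powr (1 / \<alpha>) / (2 powr (2 * \<alpha> + 4 + 1 / \<alpha>) * \<kappa>\<^sup>2 * real n))
             powr (2 * \<alpha> / (1 + 2 * \<alpha>))) (min (M\<^sup>2 / 4) (L\<^sup>2)) = 0"
      using True assms(17,22) by simp
    then show ?thesis by simp
  next
    case False
    then have n1: "1 \<le> n" by simp
    define A where "A = min ((3 * M powr (1 / \<alpha>) / (2 powr (2 * \<alpha> + 4 + 1 / \<alpha>) * \<kappa>\<^sup>2 * real n))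
             powr (2 * \<alpha> / (1 + 2 * \<alpha>))) (min (M\<^sup>2 / 4) (L\<^sup>2))"
    obtain m :: nat where m: "1 \<le> m" "sqrt A * (2 * real m) powr \<alpha> \<le> M"
      "real n * (\<kappa>^2 * ((sqrt A)^2 / (3 * real m))) \<le> 1/4"
      using choice[OF assms(22) assms(17) assms(12) assms(20,21) n1] unfolding A_def by blast
    have A0: "0 \<le> A" unfolding A_def using assms(17,22) by auto
    have AL: "A \<le> L^2" unfolding A_def by auto
    have HL: "sqrt A \<le> b - a"
    proof -
      have "sqrt A \<le> sqrt (L^2)" using AL by (rule real_sqrt_le_mono)
      then show ?thesis using assms(16,17) by simp
    qed
    define x where "x = real n * (\<kappa>^2 * ((sqrt A)^2 / (3 * real m)))"
    have x0: "0 \<le> x" unfolding x_def by simp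
    have c1: "\<kappa>^2 * ((sqrt A)^2 / (3 * real m)) \<le> 1"
    proof -
      have "1 * (\<kappa>^2 * ((sqrt A)^2 / (3 * real m))) \<le> real n * (\<kappa>^2 * ((sqrt A)^2 / (3 * real m)))"
        using n1 by (intro mult_right_mono) auto
      then show ?thesis using m(3) by simp
    qed
    have bound: "ennreal (cK\<^sup>2 / 48 * A) \<le> (SUP gs\<in>holder_class \<alpha> M J. risk n \<nu> S u gs gt)"
      if gt: "gt \<in> estimators n \<nu> J" for gt
    proof -
      interpret E: est \<nu> S I J u a b cK \<kappa> m "sqrt A" n gt
        by unfold_locales (fact sigma_finite_measure.sigma_finite_countable[OF assms(1)] assms(2) assms(3) assms(6) assms(7) assms(9) assms(11) assms(12)
            assms(13) KJ ab assms(18) assms(19)[unfolded K] m(1) HL gt real_sqrt_ge_zero[OF A0])+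
      have "ennreal (cK^2 * (sqrt A)^2 * (1 - x)^2 / 24) \<le> (SUP gs\<in>holder_class \<alpha> M J. risk n \<nu> S u gs gt)"
        unfolding x_def by (rule E.main_bound[OF c1 m(3)[THEN order_trans] m(2) assms(20,21)]) simp
      moreover have "cK\<^sup>2 / 48 * A \<le> cK^2 * (sqrt A)^2 * (1 - x)^2 / 24"
      proof -
        have "x \<le> 1/4" using m(3) unfolding x_def .
        then have "3/4 \<le> 1 - x" by simp
        then have "(3/4)^2 \<le> (1 - x)^2" by (rule power_mono) simp
        then have "1/2 \<le> (1 - x)^2" by (simp add: power2_eq_square)
        then have "cK^2 * A * (1/2) \<le> cK^2 * A * (1 - x)^2" using A0 by (intro mult_left_mono) auto
        then show ?thesis using A0 by (simp add: mult.commute)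
      qed
      ultimately show ?thesis by (meson ennreal_leI order_trans)
    qed
    show ?thesis unfolding minimax_risk_def A_def[symmetric]
      by (rule INF_greatest) (rule bound)
  qed
qed

end
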